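(* Let $\omega$ be a weight on a countable group $G$, and let $\mu$ be a probability measure on $G$ with $\mu\in\bigcup_{p\ge1}\ell^1(G,\omega_p)$. Then $\mu$ has a finite Lyapunov exponent with respect to $\omega$, and \[ \mathrm{Ly}_\omega(G,\mu)=\lim_{p\to\infty}p\log r_{\ell^1(G,\omega_p)}(\mu), \] where $r_{\ell^1(G,\omega_p)}(\mu)$ is the spectral radius of $\mu$ in the Banach algebra $\ell^1(G,\omega_p)$.
   Context: A weight on $G$ is $\omega:G\to[a,\infty)$, $a>0$, with $\omega(st)\le C\omega(s)\omega(t)$ for some $C>0$ and all $s,t\in G$. For $p\ge1$, $\omega_p(s)=\omega(s)^{1/p}$ (again a weight). For a weight $\omega$, $\ell^1(G,\omega)=\{f:\sum_s|f(s)|\omega(s)<\infty\}$ with norm $\|f\|_{1,\omega}=\sum_s|f(s)|\omega(s)$, a Banach algebra under convolution $f*g(s)=\sum_tf(t)g(t^{-1}s)$ (after rescaling $\omega$ to be submultiplicative; the spectral radius is unaffected). The Lyapunov exponent is $\mathrm{Ly}_\omega(G,\mu)=\lim_{n\to\infty}\frac1n\sum_s\mu^{*n}(s)\log\omega(s)$. *)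

theory Defs
  imports "HOL-Analysis.Analysis" "HOL-Algebra.Group"
begin

definition conv :: "('a, 'm) monoid_scheme \<Rightarrow> ('a \<Rightarrow> 'b::real_normed_field) \<Rightarrow> ('a \<Rightarrow> 'b) \<Rightarrow> 'a \<Rightarrow> 'b" where
  "conv G f g s = (\<Sum>\<^sub>\<infinity>t\<in>carrier G. f t * g (inv\<^bsub>G\<^esub> t \<otimes>\<^bsub>G\<^esub> s))"

definition delta :: "('a, 'm) monoid_scheme \<Rightarrow> 'a \<Rightarrow> 'b::real_normed_field" where
  "delta G s = (if s = \<one>\<^bsub>G\<^esub> then 1 else 0)"

fun conv_pow :: "('a, 'm) monoid_scheme \<Rightarrow> ('a \<Rightarrow> 'b::real_normed_field) \<Rightarrow> nat \<Rightarrow> 'a \<Rightarrow> 'b" where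
  "conv_pow G f 0 = delta G"
| "conv_pow G f (Suc n) = conv G f (conv_pow G f n)"

definition is_weight :: "('a, 'm) monoid_scheme \<Rightarrow> ('a \<Rightarrow> real) \<Rightarrow> bool" where
  "is_weight G w \<longleftrightarrow> (\<exists>a>0. \<forall>s\<in>carrier G. a \<le> w s) \<and>
     (\<exists>C>0. \<forall>s\<in>carrier G. \<forall>t\<in>carrier G. w (s \<otimes>\<^bsub>G\<^esub> t) \<le> C * w s * w t)"

definition l1 :: "('a, 'm) monoid_scheme \<Rightarrow> ('a \<Rightarrow> real) \<Rightarrow> ('a \<Rightarrow> complex) set" where
  "l1 G w = {f. (\<lambda>s. norm (f s) * w s) summable_on carrier G}"

definition l1_invertible :: "('a, 'm) monoid_scheme \<Rightarrow> ('a \<Rightarrow> real) \<Rightarrow> ('a \<Rightarrow> complex) \<Rightarrow> bool" where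
  "l1_invertible G w f \<longleftrightarrow> (\<exists>g\<in>l1 G w. \<forall>s\<in>carrier G.
      conv G f g s = delta G s \<and> conv G g f s = delta G s)"

definition l1_spectrum :: "('a, 'm) monoid_scheme \<Rightarrow> ('a \<Rightarrow> real) \<Rightarrow> ('a \<Rightarrow> complex) \<Rightarrow> complex set" where
  "l1_spectrum G w f = {z. \<not> l1_invertible G w (\<lambda>s. z * delta G s - f s)}"

definition l1_spectral_radius :: "('a, 'm) monoid_scheme \<Rightarrow> ('a \<Rightarrow> real) \<Rightarrow> ('a \<Rightarrow> complex) \<Rightarrow> real" where
  "l1_spectral_radius G w f = Sup (norm ` l1_spectrum G w f)"

end

theory Submission
  imports Defs
begin

lemma (in group) bij_mult_left: "t \<in> carrier G \<Longrightarrow> bij_betw (\<lambda>u. t \<otimes> u) (carrier G) (carrier G)"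
  apply (rule bij_betw_byWitness[where f' = "\<lambda>s. inv t \<otimes> s"])
  by (auto simp: m_assoc[symmetric])

lemma (in group) bij_invmult_left: "t \<in> carrier G \<Longrightarrow> bij_betw (\<lambda>u. inv t \<otimes> u) (carrier G) (carrier G)"
  using bij_mult_left[of "inv t"] by simp


lemma has_sum_single_point:
  fixes F :: "'x \<Rightarrow> 'c::{comm_monoid_add,t2_space}"
  assumes "x \<in> A" "\<And>y. y \<in> A \<Longrightarrow> y \<noteq> x \<Longrightarrow> F y = 0"
  shows "(F has_sum F x) A"
proof -
  have "(F has_sum F x) {x}" by (simp add: has_sum_finite[of "{x}", simplified])
  moreover have "(F has_sum F x) A \<longleftrightarrow> (F has_sum F x) {x}"
    by (rule has_sum_cong_neutral) (use assms in auto)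
  ultimately show ?thesis by simp
qed

lemma prod_summable:
  fixes P :: "'x \<times> 'y \<Rightarrow> 'c::banach"
  assumes a: "\<alpha> summable_on A" and bb: "\<beta> summable_on B"
    and a0: "\<And>x. x \<in> A \<Longrightarrow> 0 \<le> \<alpha> x" and b0: "\<And>y. y \<in> B \<Longrightarrow> 0 \<le> \<beta> y"
    and le: "\<And>x y. x \<in> A \<Longrightarrow> y \<in> B \<Longrightarrow> norm (P (x,y)) \<le> \<alpha> x * \<beta> y"
  shows "(\<lambda>p. norm (P p)) summable_on A \<times> B" and "P summable_on A \<times> B"
proof -
  have "(\<lambda>(x,y). \<alpha> x * \<beta> y) summable_on Sigma A (\<lambda>_. B)"
  proof (rule summable_on_SigmaI)
    fix x assume "x \<in> A"
    show "((\<lambda>y. case (x, y) of (x, y) \<Rightarrow> \<alpha> x * \<beta> y) has_sum \<alpha> x * infsum \<beta> B) B"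
      using bb by (simp add: has_sum_cmult_right)
  next
    show "(\<lambda>x. \<alpha> x * infsum \<beta> B) summable_on A" using a by (rule summable_on_cmult_left)
  qed (use a0 b0 in auto)
  then show n: "(\<lambda>p. norm (P p)) summable_on A \<times> B"
    by (rule summable_on_comparison_test) (use le in auto)
  show "P summable_on A \<times> B" by (rule abs_summable_summable) (use n in simp)
qed


lemma sigma_summable:
  fixes P :: "'x \<times> 'y \<Rightarrow> 'c::banach"
  assumes row: "\<And>x. x \<in> A \<Longrightarrow> ((\<lambda>y. \<gamma> (x,y)) has_sum r x) B" and rs: "r summable_on A"
    and g0: "\<And>x y. x \<in> A \<Longrightarrow> y \<in> B \<Longrightarrow> 0 \<le> \<gamma> (x,y)"
    and le: "\<And>x y. x \<in> A \<Longrightarrow> y \<in> B \<Longrightarrow> norm (P (x,y)) \<le> \<gamma> (x,y)"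
  shows "(\<lambda>p. norm (P p)) summable_on A \<times> B" and "P summable_on A \<times> B"
proof -
  have "\<gamma> summable_on Sigma A (\<lambda>_. B)"
    by (rule summable_on_SigmaI[OF row rs]) (use g0 in auto)
  then show n: "(\<lambda>p. norm (P p)) summable_on A \<times> B"
    by (rule summable_on_comparison_test) (use le in auto)
  show "P summable_on A \<times> B" by (rule abs_summable_summable) (use n in simp)
qed


lemma infsum_of_real_c: "(\<Sum>\<^sub>\<infinity>x\<in>A. complex_of_real (f x)) = complex_of_real (infsum f A)"
proof (cases "f summable_on A")
  case True
  then show ?thesis by (intro infsumI has_sum_of_real) simp
next
  case False
  have "\<not> (\<lambda>x. complex_of_real (f x)) summable_on A"
  proof
    assume "(\<lambda>x. complex_of_real (f x)) summable_on A"
    from summable_on_Re[OF this] False show False by simp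
  qed
  then show ?thesis using False by (simp add: infsum_not_exists)
qed

lemma infsum_shift_nat:
  fixes g :: "nat \<Rightarrow> 'c::banach"
  assumes "g summable_on UNIV"
  shows "infsum g UNIV = g 0 + (\<Sum>\<^sub>\<infinity>n. g (Suc n))"
proof -
  have U: "UNIV = insert 0 (range Suc)" by (auto intro: nat.exhaust)
  have "g summable_on range Suc" using assms by (rule summable_on_subset_banach) simp
  then have "infsum g (insert 0 (range Suc)) = g 0 + infsum g (range Suc)"
    by (intro infsum_insert) auto
  also have "infsum g (range Suc) = (\<Sum>\<^sub>\<infinity>n. g (Suc n))"
    by (subst infsum_reindex) (auto simp: o_def)
  finally show ?thesis using U by simp
qed


lemma infsum_sum_fin:
  fixes F :: "nat \<Rightarrow> 'x \<Rightarrow> real"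
  assumes "\<And>n. F n summable_on A"
  shows "(\<lambda>s. \<Sum>n<M. F n s) summable_on A \<and> infsum (\<lambda>s. \<Sum>n<M. F n s) A = (\<Sum>n<M. infsum (F n) A)"
proof (induction M)
  case 0 then show ?case by simp
next
  case (Suc M)
  then show ?case using assms by (simp add: summable_on_add infsum_add)
qed

locale wconv = group G for G :: "('a,'m) monoid_scheme" (structure) +
  fixes v :: "'a \<Rightarrow> real" and b K :: real
  assumes b_pos: "0 < b"
    and v_ge: "\<And>s. s \<in> carrier G \<Longrightarrow> b \<le> v s"
    and v_sub: "\<And>s t. s \<in> carrier G \<Longrightarrow> t \<in> carrier G \<Longrightarrow> v (s \<otimes> t) \<le> K * v s * v t"
begin

definition L1 :: "('a \<Rightarrow> 'b::{real_normed_field,banach}) \<Rightarrow> bool" where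
  "L1 f \<longleftrightarrow> (\<lambda>s. norm (f s) * v s) summable_on carrier G"

definition nrm :: "('a \<Rightarrow> 'b::{real_normed_field,banach}) \<Rightarrow> real" where
  "nrm f = (\<Sum>\<^sub>\<infinity>s\<in>carrier G. norm (f s) * v s)"

lemma v_pos: "s \<in> carrier G \<Longrightarrow> 0 < v s"
  using v_ge b_pos by force

lemma Kv1: "1 \<le> K * v \<one>"
proof -
  have "v \<one> \<le> K * v \<one> * v \<one>" using v_sub[of \<one> \<one>] by simp
  then show ?thesis using v_pos[of \<one>] by (simp add: mult.commute)
qed

lemma K_pos: "0 < K"
  using Kv1 v_pos[of \<one>] by (smt (verit) mult_nonpos_nonneg one_closed)

lemma reindex_infsum: "t \<in> carrier G \<Longrightarrow> (\<Sum>\<^sub>\<infinity>s\<in>carrier G. h (inv t \<otimes> s)) = (\<Sum>\<^sub>\<infinity>s\<in>carrier G. h s)"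
  by (rule infsum_reindex_bij_betw[OF bij_invmult_left])

lemma reindex_summable: "t \<in> carrier G \<Longrightarrow> (\<lambda>s. h (inv t \<otimes> s)) summable_on carrier G \<longleftrightarrow> h summable_on carrier G"
  by (rule summable_on_reindex_bij_betw[OF bij_invmult_left])

lemma reindex_infsum2: "t \<in> carrier G \<Longrightarrow> (\<Sum>\<^sub>\<infinity>s\<in>carrier G. h (t \<otimes> s)) = (\<Sum>\<^sub>\<infinity>s\<in>carrier G. h s)"
  by (rule infsum_reindex_bij_betw[OF bij_mult_left])

lemma reindex_summable2: "t \<in> carrier G \<Longrightarrow> (\<lambda>s. h (t \<otimes> s)) summable_on carrier G \<longleftrightarrow> h summable_on carrier G"
  by (rule summable_on_reindex_bij_betw[OF bij_mult_left])

lemma L1_norm_summable: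
  assumes "L1 f" shows "(\<lambda>s. norm (f s)) summable_on carrier G"
proof (rule summable_on_comparison_test)
  show "(\<lambda>s. (norm (f s) * v s) * (1/b)) summable_on carrier G"
    using assms unfolding L1_def by (intro summable_on_cmult_left)
  fix s assume s: "s \<in> carrier G"
  show "norm (f s) \<le> norm (f s) * v s * (1 / b)"
  proof -
    have "norm (f s) * b \<le> norm (f s) * v s" using v_ge[OF s] by (intro mult_left_mono) simp_all
    then show ?thesis using b_pos by (simp add: field_simps)
  qed
qed simp

lemma L1_summable: "L1 f \<Longrightarrow> f summable_on carrier G"
  by (rule abs_summable_summable, rule L1_norm_summable)

lemma nrm_nonneg: "0 \<le> nrm f"
  unfolding nrm_def by (intro infsum_nonneg) (simp add: less_imp_le v_pos)

lemma norm_le_nrm: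
  assumes "L1 f" "s \<in> carrier G" shows "norm (f s) \<le> nrm f / b"
proof -
  have "sum (\<lambda>s. norm (f s) * v s) {s} \<le> nrm f"
    unfolding nrm_def using assms v_pos
    by (intro finite_sum_le_infsum) (auto simp: L1_def less_imp_le)
  then have "norm (f s) * v s \<le> nrm f" by simp
  moreover have "norm (f s) * b \<le> norm (f s) * v s" using v_ge[OF assms(2)] by (simp add: mult_left_mono)
  ultimately show ?thesis using b_pos by (simp add: field_simps)
qed

lemma conv_abs_summable:
  assumes "L1 f" "L1 g" "s \<in> carrier G"
  shows "(\<lambda>t. norm (f t * g (inv t \<otimes> s))) summable_on carrier G"
proof (rule summable_on_comparison_test)
  show "(\<lambda>t. norm (f t) * (nrm g / b)) summable_on carrier G"
    using L1_norm_summable[OF assms(1)] by (intro summable_on_cmult_left)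
  fix t assume t: "t \<in> carrier G"
  have "norm (g (inv t \<otimes> s)) \<le> nrm g / b" using norm_le_nrm[OF assms(2)] t assms(3) by simp
  then show "norm (f t * g (inv t \<otimes> s)) \<le> norm (f t) * (nrm g / b)"
    unfolding norm_mult by (rule mult_left_mono) simp_all
qed simp

lemma conv_summable: "L1 f \<Longrightarrow> L1 g \<Longrightarrow> s \<in> carrier G \<Longrightarrow> (\<lambda>t. f t * g (inv t \<otimes> s)) summable_on carrier G"
  by (rule abs_summable_summable, rule conv_abs_summable)

lemma reindex_has_sum: "t \<in> carrier G \<Longrightarrow> ((\<lambda>s. h (inv t \<otimes> s)) has_sum S) (carrier G) \<longleftrightarrow> (h has_sum S) (carrier G)"
  by (rule has_sum_reindex_bij_betw[OF bij_invmult_left])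

lemma L1_has_sum: "L1 f \<Longrightarrow> ((\<lambda>s. norm (f s) * v s) has_sum nrm f) (carrier G)"
  unfolding L1_def nrm_def by simp

lemma conv_L1_nrm:
  fixes f g :: "'a \<Rightarrow> 'b::{real_normed_field,banach}"
  assumes f: "L1 f" and g: "L1 g"
  shows "L1 (conv G f g) \<and> nrm (conv G f g) \<le> K * nrm f * nrm g"
proof -
  define H where "H = (\<lambda>(t,s). K * (norm (f t) * v t) * (norm (g (inv t \<otimes> s)) * v (inv t \<otimes> s)))"
  have Hrow: "((\<lambda>s. H (t,s)) has_sum (K * (norm (f t) * v t) * nrm g)) (carrier G)" if t: "t \<in> carrier G" for t
  proof -
    have "((\<lambda>s. norm (g (inv t \<otimes> s)) * v (inv t \<otimes> s)) has_sum nrm g) (carrier G)"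
      using reindex_has_sum[OF t, of "\<lambda>s. norm (g s) * v s"] L1_has_sum[OF g] by simp
    then show ?thesis unfolding H_def by (simp add: has_sum_cmult_right)
  qed
  have rowsum: "(\<lambda>t. K * (norm (f t) * v t) * nrm g) summable_on carrier G"
    using f unfolding L1_def by (intro summable_on_cmult_left summable_on_cmult_right)
  have Hsum: "H summable_on Sigma (carrier G) (\<lambda>_. carrier G)"
    by (rule summable_on_SigmaI[OF Hrow rowsum])
       (auto simp: H_def K_pos v_pos less_imp_le)
  have Hsw: "(\<lambda>(s,t). H (t,s)) summable_on (carrier G \<times> carrier G)"
    using Hsum summable_on_swap[of H "carrier G" "carrier G"] by simp
  define S where "S = (\<lambda>s. \<Sum>\<^sub>\<infinity>t\<in>carrier G. H (t,s))"
  have Scol: "(\<lambda>t. H (t,s)) summable_on carrier G" if "s \<in> carrier G" for s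
    using summable_on_SigmaD1[of "\<lambda>s t. H (t,s)" "carrier G" "\<lambda>_. carrier G" s] Hsw that by simp
  have Ssum: "S summable_on carrier G"
    unfolding S_def using summable_on_Sigma_banach[of "\<lambda>s t. H (t,s)" "carrier G" "\<lambda>_. carrier G"] Hsw by simp
  have Stot: "infsum S (carrier G) = K * nrm f * nrm g"
  proof -
    have "infsum S (carrier G) = (\<Sum>\<^sub>\<infinity>t\<in>carrier G. \<Sum>\<^sub>\<infinity>s\<in>carrier G. H (t,s))"
      unfolding S_def using infsum_swap_banach[of "\<lambda>s t. H (t,s)" "carrier G" "carrier G"] Hsw by simp
    also have "\<dots> = (\<Sum>\<^sub>\<infinity>t\<in>carrier G. K * (norm (f t) * v t) * nrm g)"
      by (intro infsum_cong infsumI Hrow)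
    also have "\<dots> = K * nrm f * nrm g"
      unfolding nrm_def[of f] by (simp add: infsum_cmult_left' infsum_cmult_right')
    finally show ?thesis .
  qed
  have pt: "norm (conv G f g s) * v s \<le> S s" if s: "s \<in> carrier G" for s
  proof -
    have "norm (conv G f g s) \<le> (\<Sum>\<^sub>\<infinity>t\<in>carrier G. norm (f t * g (inv t \<otimes> s)))"
      unfolding conv_def by (rule norm_infsum_bound) (rule conv_abs_summable[OF f g s])
    then have "norm (conv G f g s) * v s \<le> (\<Sum>\<^sub>\<infinity>t\<in>carrier G. norm (f t * g (inv t \<otimes> s))) * v s"
      using v_pos[OF s] by (simp add: mult_right_mono)
    also have "\<dots> = (\<Sum>\<^sub>\<infinity>t\<in>carrier G. norm (f t * g (inv t \<otimes> s)) * v s)"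
      by (simp add: infsum_cmult_left')
    also have "\<dots> \<le> S s" unfolding S_def
    proof (rule infsum_mono)
      show "(\<lambda>t. norm (f t * g (inv t \<otimes> s)) * v s) summable_on carrier G"
        by (intro summable_on_cmult_left conv_abs_summable[OF f g s])
      show "(\<lambda>t. H (t, s)) summable_on carrier G" by (rule Scol[OF s])
      fix t assume t: "t \<in> carrier G"
      have "v s \<le> K * v t * v (inv t \<otimes> s)"
        using v_sub[of t "inv t \<otimes> s"] t s by (simp add: m_assoc[symmetric])
      then have "norm (f t) * norm (g (inv t \<otimes> s)) * v s \<le> norm (f t) * norm (g (inv t \<otimes> s)) * (K * v t * v (inv t \<otimes> s))"
        by (intro mult_left_mono) simp_all
      also have "\<dots> = H (t,s)" by (simp add: H_def algebra_simps)
      finally show "norm (f t * g (inv t \<otimes> s)) * v s \<le> H (t, s)" by (simp add: norm_mult)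
    qed
    finally show ?thesis .
  qed
  have L: "L1 (conv G f g)" unfolding L1_def
    by (rule summable_on_comparison_test[OF Ssum pt]) (simp_all add: v_pos less_imp_le)
  moreover have "nrm (conv G f g) \<le> infsum S (carrier G)"
    unfolding nrm_def[of "conv G f g"]
    by (rule infsum_mono[OF L[unfolded L1_def] Ssum pt])
  ultimately show ?thesis using Stot by simp
qed

lemma conv_assoc:
  fixes f g h :: "'a \<Rightarrow> 'b::{real_normed_field,banach}"
  assumes f: "L1 f" and g: "L1 g" and h: "L1 h" and s: "s \<in> carrier G"
  shows "conv G (conv G f g) h s = conv G f (conv G g h) s"
proof -
  define P where "P = (\<lambda>t u. f t * g (inv t \<otimes> u) * h (inv u \<otimes> s))"
  define M where "M = nrm h / b"
  have bnd: "(\<lambda>(t,u). norm (f t) * norm (g (inv t \<otimes> u)) * M) summable_on Sigma (carrier G) (\<lambda>_. carrier G)"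
  proof (rule summable_on_SigmaI)
    fix t assume t: "t \<in> carrier G"
    have "((\<lambda>u. norm (g (inv t \<otimes> u))) has_sum infsum (\<lambda>u. norm (g u)) (carrier G)) (carrier G)"
      using reindex_has_sum[OF t, of "\<lambda>u. norm (g u)"] L1_norm_summable[OF g] by simp
    then show "((\<lambda>u. case (t, u) of (t, u) \<Rightarrow> norm (f t) * norm (g (inv t \<otimes> u)) * M) has_sum
        norm (f t) * infsum (\<lambda>u. norm (g u)) (carrier G) * M) (carrier G)"
      by (simp add: has_sum_cmult_right has_sum_cmult_left mult.assoc)
  next
    show "(\<lambda>t. norm (f t) * infsum (\<lambda>u. norm (g u)) (carrier G) * M) summable_on carrier G"
      using L1_norm_summable[OF f] by (intro summable_on_cmult_left)
  next
    fix t u have "0 \<le> M" unfolding M_def using nrm_nonneg[of h] b_pos by simp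
    then show "0 \<le> (case (t, u) of (t, u) \<Rightarrow> norm (f t) * norm (g (inv t \<otimes> u)) * M)"
      by simp
  qed
  have Pabs: "(\<lambda>(t,u). norm (P t u)) summable_on (carrier G \<times> carrier G)"
  proof (rule summable_on_comparison_test[OF bnd])
    fix p assume p: "p \<in> Sigma (carrier G) (\<lambda>_. carrier G)"
    then obtain t u where tu: "p = (t,u)" "t \<in> carrier G" "u \<in> carrier G" by auto
    have "norm (h (inv u \<otimes> s)) \<le> M" unfolding M_def using norm_le_nrm[OF h] tu s by simp
    then show "(case p of (t, u) \<Rightarrow> norm (P t u)) \<le> (case p of (t, u) \<Rightarrow> norm (f t) * norm (g (inv t \<otimes> u)) * M)"
      unfolding tu P_def norm_mult by (simp add: mult_left_mono)
  qed (auto simp: case_prod_unfold)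
  have Psum: "(\<lambda>(t,u). P t u) summable_on (carrier G \<times> carrier G)"
    by (rule abs_summable_summable) (use Pabs in \<open>simp add: case_prod_unfold\<close>)
  have "conv G (conv G f g) h s = (\<Sum>\<^sub>\<infinity>u\<in>carrier G. \<Sum>\<^sub>\<infinity>t\<in>carrier G. P t u)"
    unfolding conv_def P_def by (simp add: infsum_cmult_left')
  also have "\<dots> = (\<Sum>\<^sub>\<infinity>t\<in>carrier G. \<Sum>\<^sub>\<infinity>u\<in>carrier G. P t u)"
    using infsum_swap_banach[OF Psum] by simp
  also have "\<dots> = (\<Sum>\<^sub>\<infinity>t\<in>carrier G. f t * conv G g h (inv t \<otimes> s))"
  proof (rule infsum_cong)
    fix t assume t: "t \<in> carrier G"
    have "(\<Sum>\<^sub>\<infinity>u\<in>carrier G. P t u) = f t * (\<Sum>\<^sub>\<infinity>u\<in>carrier G. g (inv t \<otimes> u) * h (inv u \<otimes> s))"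
      unfolding P_def by (simp add: infsum_cmult_right'[symmetric] mult.assoc)
    also have "(\<Sum>\<^sub>\<infinity>u\<in>carrier G. g (inv t \<otimes> u) * h (inv u \<otimes> s)) =
        (\<Sum>\<^sub>\<infinity>y\<in>carrier G. g (inv t \<otimes> (t \<otimes> y)) * h (inv (t \<otimes> y) \<otimes> s))"
      using reindex_infsum2[OF t, of "\<lambda>u. g (inv t \<otimes> u) * h (inv u \<otimes> s)"] by simp
    also have "\<dots> = conv G g h (inv t \<otimes> s)"
      unfolding conv_def using t s by (intro infsum_cong) (simp add: m_assoc[symmetric] inv_mult_group)
    finally show "(\<Sum>\<^sub>\<infinity>u\<in>carrier G. P t u) = f t * conv G g h (inv t \<otimes> s)" .
  qed
  also have "\<dots> = conv G f (conv G g h) s" unfolding conv_def ..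
  finally show ?thesis .
qed

lemma bij_pair: "bij_betw (\<lambda>(t,u). (t, t \<otimes> u)) (carrier G \<times> carrier G) (carrier G \<times> carrier G)"
  apply (rule bij_betw_byWitness[where f' = "\<lambda>(t,s). (t, inv t \<otimes> s)"])
  by (auto simp: m_assoc[symmetric])

lemma conv_weighted:
  fixes f g h :: "'a \<Rightarrow> 'b::{real_normed_field,banach}"
  assumes sm: "(\<lambda>(t,u). norm (f t * g u * h (t \<otimes> u))) summable_on (carrier G \<times> carrier G)"
  shows "(\<lambda>s. conv G f g s * h s) summable_on carrier G"
    and "(\<Sum>\<^sub>\<infinity>s\<in>carrier G. conv G f g s * h s) = (\<Sum>\<^sub>\<infinity>t\<in>carrier G. \<Sum>\<^sub>\<infinity>u\<in>carrier G. f t * g u * h (t \<otimes> u))"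
proof -
  define P where "P = (\<lambda>t s. f t * g (inv t \<otimes> s) * h s)"
  have eqc: "(\<lambda>(t,s). norm (P t s)) ((\<lambda>(t,u). (t, t \<otimes> u)) x) = (\<lambda>(t,u). norm (f t * g u * h (t \<otimes> u))) x"
    if x: "x \<in> carrier G \<times> carrier G" for x
  proof -
    obtain t u where "x = (t,u)" "t \<in> carrier G" "u \<in> carrier G" using x by auto
    then show ?thesis by (simp add: P_def m_assoc[symmetric])
  qed
  have "(\<lambda>x. (\<lambda>(t,s). norm (P t s)) ((\<lambda>(t,u). (t, t \<otimes> u)) x)) summable_on (carrier G \<times> carrier G)
     \<longleftrightarrow> (\<lambda>(t,u). norm (f t * g u * h (t \<otimes> u))) summable_on (carrier G \<times> carrier G)"
    by (rule summable_on_cong) (rule eqc)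
  then have "(\<lambda>x. (\<lambda>(t,s). norm (P t s)) ((\<lambda>(t,u). (t, t \<otimes> u)) x)) summable_on (carrier G \<times> carrier G)"
    using sm by (rule iffD2)
  then have "(\<lambda>(t,s). norm (P t s)) summable_on (carrier G \<times> carrier G)"
    by (rule summable_on_reindex_bij_betw[OF bij_pair, THEN iffD1])
  note Pn = this
  have Psum: "(\<lambda>(t,s). P t s) summable_on (carrier G \<times> carrier G)"
    by (rule abs_summable_summable) (use Pn in \<open>simp add: case_prod_unfold\<close>)
  have Psw: "(\<lambda>(s,t). P t s) summable_on (carrier G \<times> carrier G)"
    using Psum summable_on_swap[of "\<lambda>(t,s). P t s" "carrier G" "carrier G"] by simp
  have eq: "conv G f g s * h s = (\<Sum>\<^sub>\<infinity>t\<in>carrier G. P t s)" for s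
    unfolding conv_def P_def by (simp add: infsum_cmult_left')
  show "(\<lambda>s. conv G f g s * h s) summable_on carrier G"
    unfolding eq using summable_on_Sigma_banach[of "\<lambda>s t. P t s" "carrier G" "\<lambda>_. carrier G"] Psw by simp
  have "(\<Sum>\<^sub>\<infinity>s\<in>carrier G. conv G f g s * h s) = (\<Sum>\<^sub>\<infinity>s\<in>carrier G. \<Sum>\<^sub>\<infinity>t\<in>carrier G. P t s)"
    unfolding eq ..
  also have "\<dots> = (\<Sum>\<^sub>\<infinity>t\<in>carrier G. \<Sum>\<^sub>\<infinity>s\<in>carrier G. P t s)"
    using infsum_swap_banach[OF Psum] by simp
  also have "\<dots> = (\<Sum>\<^sub>\<infinity>t\<in>carrier G. \<Sum>\<^sub>\<infinity>u\<in>carrier G. f t * g u * h (t \<otimes> u))"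
  proof (rule infsum_cong)
    fix t assume t: "t \<in> carrier G"
    show "(\<Sum>\<^sub>\<infinity>s\<in>carrier G. P t s) = (\<Sum>\<^sub>\<infinity>u\<in>carrier G. f t * g u * h (t \<otimes> u))"
    proof -
      have "(\<Sum>\<^sub>\<infinity>u\<in>carrier G. f t * g u * h (t \<otimes> u)) = (\<Sum>\<^sub>\<infinity>u\<in>carrier G. P t (t \<otimes> u))"
        using t by (intro infsum_cong) (simp add: P_def m_assoc[symmetric])
      then show ?thesis using reindex_infsum2[OF t, of "P t"] by simp
    qed
  qed
  finally show "(\<Sum>\<^sub>\<infinity>s\<in>carrier G. conv G f g s * h s) = (\<Sum>\<^sub>\<infinity>t\<in>carrier G. \<Sum>\<^sub>\<infinity>u\<in>carrier G. f t * g u * h (t \<otimes> u))" .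
qed


lemma L1_cong: "(\<And>x. x \<in> carrier G \<Longrightarrow> f x = f' x) \<Longrightarrow> L1 f \<longleftrightarrow> L1 f'"
  unfolding L1_def by (intro summable_on_cong) simp

lemma nrm_cong: "(\<And>x. x \<in> carrier G \<Longrightarrow> f x = f' x) \<Longrightarrow> nrm f = nrm f'"
  unfolding nrm_def by (intro infsum_cong) simp

lemma conv_cong_left: "(\<And>x. x \<in> carrier G \<Longrightarrow> f x = f' x) \<Longrightarrow> conv G f g s = conv G f' g s"
  unfolding conv_def by (intro infsum_cong) simp

lemma conv_cong_right: "s \<in> carrier G \<Longrightarrow> (\<And>x. x \<in> carrier G \<Longrightarrow> g x = g' x) \<Longrightarrow> conv G f g s = conv G f g' s"
  unfolding conv_def by (intro infsum_cong) simp

lemma L1_delta: "L1 (delta G :: 'a \<Rightarrow> 'b::{real_normed_field,banach})"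
  and nrm_delta: "nrm (delta G :: 'a \<Rightarrow> 'b::{real_normed_field,banach}) = v \<one>"
proof -
  have "((\<lambda>s. norm (delta G s :: 'b) * v s) has_sum (norm (delta G \<one> :: 'b) * v \<one>)) (carrier G)"
    by (rule has_sum_single_point) (auto simp: delta_def)
  then show "L1 (delta G :: 'a \<Rightarrow> 'b)" "nrm (delta G :: 'a \<Rightarrow> 'b) = v \<one>"
    unfolding L1_def nrm_def by (auto simp: summable_on_def delta_def infsumI)
qed

lemma conv_delta_left: "s \<in> carrier G \<Longrightarrow> conv G (delta G) f s = f s"
proof -
  assume s: "s \<in> carrier G"
  have "((\<lambda>t. delta G t * f (inv t \<otimes> s)) has_sum (delta G \<one> * f (inv \<one> \<otimes> s))) (carrier G)"
    by (rule has_sum_single_point) (auto simp: delta_def)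
  then show ?thesis unfolding conv_def using s by (simp add: infsumI delta_def)
qed

lemma conv_delta_right: "s \<in> carrier G \<Longrightarrow> conv G f (delta G) s = f s"
proof -
  assume s: "s \<in> carrier G"
  have "((\<lambda>t. f t * delta G (inv t \<otimes> s)) has_sum (f s * delta G (inv s \<otimes> s))) (carrier G)"
  proof (rule has_sum_single_point[OF s])
    fix y assume y: "y \<in> carrier G" "y \<noteq> s"
    have "inv y \<otimes> s \<noteq> \<one>"
    proof
      assume "inv y \<otimes> s = \<one>"
      then have "y \<otimes> (inv y \<otimes> s) = y" using y s by simp
      then show False using y s by (simp add: m_assoc[symmetric])
    qed
    then show "f y * delta G (inv y \<otimes> s) = 0" by (simp add: delta_def)
  qed
  then show ?thesis unfolding conv_def using s by (simp add: infsumI delta_def)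
qed

lemma L1_lin:
  fixes f1 f2 :: "'a \<Rightarrow> 'b::{real_normed_field,banach}"
  assumes "L1 f1" "L1 f2"
  shows "L1 (\<lambda>x. a * f1 x + c * f2 x) \<and> nrm (\<lambda>x. a * f1 x + c * f2 x) \<le> norm a * nrm f1 + norm c * nrm f2"
proof -
  have sm: "(\<lambda>x. norm a * (norm (f1 x) * v x) + norm c * (norm (f2 x) * v x)) summable_on carrier G"
    using assms unfolding L1_def by (intro summable_on_add summable_on_cmult_right)
  have le: "norm (a * f1 x + c * f2 x) * v x \<le> norm a * (norm (f1 x) * v x) + norm c * (norm (f2 x) * v x)"
    if "x \<in> carrier G" for x
  proof -
    have "norm (a * f1 x + c * f2 x) * v x \<le> (norm a * norm (f1 x) + norm c * norm (f2 x)) * v x"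
      using v_pos[OF that] by (intro mult_right_mono) (auto intro: norm_triangle_le simp: norm_mult)
    then show ?thesis by (simp add: algebra_simps)
  qed
  have L: "L1 (\<lambda>x. a * f1 x + c * f2 x)" unfolding L1_def
    by (rule summable_on_comparison_test[OF sm le]) (auto intro!: mult_nonneg_nonneg less_imp_le[OF v_pos])
  have "nrm (\<lambda>x. a * f1 x + c * f2 x) \<le> (\<Sum>\<^sub>\<infinity>x\<in>carrier G. norm a * (norm (f1 x) * v x) + norm c * (norm (f2 x) * v x))"
    unfolding nrm_def[of "\<lambda>x. a * f1 x + c * f2 x"] by (rule infsum_mono[OF L[unfolded L1_def] sm le])
  also have "\<dots> = norm a * nrm f1 + norm c * nrm f2"
    using assms unfolding L1_def nrm_def
    by (subst infsum_add) (auto intro: summable_on_cmult_right simp: infsum_cmult_right')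
  finally show ?thesis using L by simp
qed

lemma conv_lin_left:
  fixes f1 f2 g :: "'a \<Rightarrow> 'b::{real_normed_field,banach}"
  assumes "L1 f1" "L1 f2" "L1 g" "s \<in> carrier G"
  shows "conv G (\<lambda>x. a * f1 x + c * f2 x) g s = a * conv G f1 g s + c * conv G f2 g s"
proof -
  have "conv G (\<lambda>x. a * f1 x + c * f2 x) g s = (\<Sum>\<^sub>\<infinity>t\<in>carrier G. a * (f1 t * g (inv t \<otimes> s)) + c * (f2 t * g (inv t \<otimes> s)))"
    unfolding conv_def by (intro infsum_cong) (simp add: algebra_simps)
  also have "\<dots> = a * conv G f1 g s + c * conv G f2 g s"
    unfolding conv_def using assms
    by (subst infsum_add) (auto intro!: summable_on_cmult_right conv_summable simp: infsum_cmult_right')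
  finally show ?thesis .
qed

lemma conv_lin_right:
  fixes f g1 g2 :: "'a \<Rightarrow> 'b::{real_normed_field,banach}"
  assumes "L1 f" "L1 g1" "L1 g2" "s \<in> carrier G"
  shows "conv G f (\<lambda>x. a * g1 x + c * g2 x) s = a * conv G f g1 s + c * conv G f g2 s"
proof -
  have "conv G f (\<lambda>x. a * g1 x + c * g2 x) s = (\<Sum>\<^sub>\<infinity>t\<in>carrier G. a * (f t * g1 (inv t \<otimes> s)) + c * (f t * g2 (inv t \<otimes> s)))"
    unfolding conv_def by (intro infsum_cong) (simp add: algebra_simps)
  also have "\<dots> = a * conv G f g1 s + c * conv G f g2 s"
    unfolding conv_def using assms
    by (subst infsum_add) (auto intro!: summable_on_cmult_right conv_summable simp: infsum_cmult_right')
  finally show ?thesis .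
qed

lemma conv_scale_left: "conv G (\<lambda>x. a * f x) g s = a * conv G f g s"
  unfolding conv_def by (simp add: infsum_cmult_right'[symmetric] mult.assoc)

lemma conv_scale_right: "conv G f (\<lambda>x. a * g x) s = a * conv G f g s"
  unfolding conv_def by (simp add: infsum_cmult_right'[symmetric] algebra_simps)


lemma L1_norm_infsum_le: "L1 f \<Longrightarrow> (\<Sum>\<^sub>\<infinity>t\<in>carrier G. norm (f t)) \<le> nrm f / b"
proof -
  assume f: "L1 f"
  have "(\<Sum>\<^sub>\<infinity>t\<in>carrier G. norm (f t)) \<le> (\<Sum>\<^sub>\<infinity>t\<in>carrier G. (norm (f t) * v t) * (1/b))"
  proof (rule infsum_mono)
    show "(\<lambda>t. norm (f t)) summable_on carrier G" by (rule L1_norm_summable[OF f])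
    show "(\<lambda>t. norm (f t) * v t * (1 / b)) summable_on carrier G"
      using f unfolding L1_def by (rule summable_on_cmult_left)
    fix t assume t: "t \<in> carrier G"
    have "norm (f t) * b \<le> norm (f t) * v t" using v_ge[OF t] by (intro mult_left_mono) simp_all
    then show "norm (f t) \<le> norm (f t) * v t * (1 / b)" using b_pos by (simp add: field_simps)
  qed
  also have "\<dots> = (\<Sum>\<^sub>\<infinity>t\<in>carrier G. (norm (f t) * v t)) * (1/b)" by (rule infsum_cmult_left')
  also have "\<dots> = nrm f / b" unfolding nrm_def by simp
  finally show ?thesis .
qed

context
  fixes F :: "nat \<Rightarrow> 'a \<Rightarrow> 'b::{real_normed_field,banach}"
  assumes FL: "\<And>n. L1 (F n)" and Fs: "(\<lambda>n. nrm (F n)) summable_on UNIV"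
begin

lemma Fs_div: "(\<lambda>n. nrm (F n) / b) summable_on UNIV"
  using summable_on_cmult_left[OF Fs, of "1/b"] by simp

lemma series_pt_abs: "s \<in> carrier G \<Longrightarrow> (\<lambda>n. norm (F n s)) summable_on UNIV"
  by (rule summable_on_comparison_test[where f = "\<lambda>n. nrm (F n) * (1/b)"])
     (use Fs_div norm_le_nrm[OF FL] in auto)

lemma series_pt: "s \<in> carrier G \<Longrightarrow> (\<lambda>n. F n s) summable_on UNIV"
  by (rule abs_summable_summable, rule series_pt_abs)

lemma series_L1_nrm: "L1 (\<lambda>s. \<Sum>\<^sub>\<infinity>n. F n s) \<and> nrm (\<lambda>s. \<Sum>\<^sub>\<infinity>n. F n s) \<le> (\<Sum>\<^sub>\<infinity>n. nrm (F n))"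
proof -
  define Q where "Q = (\<lambda>(n,s). norm (F n s) * v s)"
  have Qsum: "Q summable_on Sigma UNIV (\<lambda>_. carrier G)"
    by (rule summable_on_SigmaI[where g = "\<lambda>n. nrm (F n)"])
       (auto simp: Q_def L1_has_sum[OF FL] Fs intro!: mult_nonneg_nonneg less_imp_le[OF v_pos])
  have Qsw: "(\<lambda>(s,n). Q (n,s)) summable_on (carrier G \<times> UNIV)"
    using Qsum summable_on_swap[of Q UNIV "carrier G"] by simp
  define T where "T = (\<lambda>s. \<Sum>\<^sub>\<infinity>n. Q (n,s))"
  have Tsum: "T summable_on carrier G"
    unfolding T_def using summable_on_Sigma_banach[of "\<lambda>s n. Q (n,s)" "carrier G" "\<lambda>_. UNIV"] Qsw by simp
  have Ttot: "infsum T (carrier G) = (\<Sum>\<^sub>\<infinity>n. nrm (F n))"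
  proof -
    have "infsum T (carrier G) = (\<Sum>\<^sub>\<infinity>n. \<Sum>\<^sub>\<infinity>s\<in>carrier G. Q (n,s))"
      unfolding T_def using infsum_swap_banach[of "\<lambda>s n. Q (n,s)" "carrier G" UNIV] Qsw by simp
    also have "\<dots> = (\<Sum>\<^sub>\<infinity>n. nrm (F n))"
      by (intro infsum_cong) (simp add: Q_def nrm_def)
    finally show ?thesis .
  qed
  have pt: "norm (\<Sum>\<^sub>\<infinity>n. F n s) * v s \<le> T s" if s: "s \<in> carrier G" for s
  proof -
    have "norm (\<Sum>\<^sub>\<infinity>n. F n s) \<le> (\<Sum>\<^sub>\<infinity>n. norm (F n s))"
      by (rule norm_infsum_bound) (use series_pt_abs[OF s] in simp)
    then have "norm (\<Sum>\<^sub>\<infinity>n. F n s) * v s \<le> (\<Sum>\<^sub>\<infinity>n. norm (F n s)) * v s"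
      using v_pos[OF s] by (simp add: mult_right_mono)
    also have "\<dots> = T s" unfolding T_def Q_def by (simp add: infsum_cmult_left')
    finally show ?thesis .
  qed
  have L: "L1 (\<lambda>s. \<Sum>\<^sub>\<infinity>n. F n s)" unfolding L1_def
    by (rule summable_on_comparison_test[OF Tsum pt]) (auto intro!: mult_nonneg_nonneg less_imp_le[OF v_pos])
  moreover have "nrm (\<lambda>s. \<Sum>\<^sub>\<infinity>n. F n s) \<le> infsum T (carrier G)"
    unfolding nrm_def[of "\<lambda>s. \<Sum>\<^sub>\<infinity>n. F n s"] by (rule infsum_mono[OF L[unfolded L1_def] Tsum pt])
  ultimately show ?thesis using Ttot by simp
qed

lemma series_conv_right:
  assumes f: "L1 f" and s: "s \<in> carrier G"
  shows "conv G f (\<lambda>s. \<Sum>\<^sub>\<infinity>n. F n s) s = (\<Sum>\<^sub>\<infinity>n. conv G f (F n) s)"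
proof -
  have P: "(\<lambda>(t,n). f t * F n (inv t \<otimes> s)) summable_on carrier G \<times> UNIV"
  proof (rule prod_summable(2)[where \<alpha> = "\<lambda>t. norm (f t)" and \<beta> = "\<lambda>n. nrm (F n) / b"])
    show "(\<lambda>t. norm (f t)) summable_on carrier G" by (rule L1_norm_summable[OF f])
    show "(\<lambda>n. nrm (F n) / b) summable_on UNIV" by (rule Fs_div)
    fix t n assume t: "t \<in> carrier G"
    have "norm (F n (inv t \<otimes> s)) \<le> nrm (F n) / b" using norm_le_nrm[OF FL] t s by simp
    then have "norm (f t) * norm (F n (inv t \<otimes> s)) \<le> norm (f t) * (nrm (F n) / b)"
      by (rule mult_left_mono) simp
    then show "norm (case (t, n) of (t, n) \<Rightarrow> f t * F n (inv t \<otimes> s)) \<le> norm (f t) * (nrm (F n) / b)"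
      by (simp add: norm_mult)
  qed (use nrm_nonneg b_pos in \<open>auto intro: divide_nonneg_pos\<close>)
  have "conv G f (\<lambda>s. \<Sum>\<^sub>\<infinity>n. F n s) s = (\<Sum>\<^sub>\<infinity>t\<in>carrier G. \<Sum>\<^sub>\<infinity>n. f t * F n (inv t \<otimes> s))"
    unfolding conv_def by (simp add: infsum_cmult_right')
  also have "\<dots> = (\<Sum>\<^sub>\<infinity>n. \<Sum>\<^sub>\<infinity>t\<in>carrier G. f t * F n (inv t \<otimes> s))"
    by (rule infsum_swap_banach[OF P])
  also have "\<dots> = (\<Sum>\<^sub>\<infinity>n. conv G f (F n) s)" unfolding conv_def ..
  finally show ?thesis .
qed

lemma series_conv_left:
  assumes f: "L1 f" and s: "s \<in> carrier G"
  shows "conv G (\<lambda>s. \<Sum>\<^sub>\<infinity>n. F n s) f s = (\<Sum>\<^sub>\<infinity>n. conv G (F n) f s)"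
proof -
  define M where "M = nrm f / b"
  have M0: "0 \<le> M" unfolding M_def using nrm_nonneg[of f] b_pos by simp
  have P: "(\<lambda>(n,t). F n t * f (inv t \<otimes> s)) summable_on UNIV \<times> carrier G"
  proof (rule sigma_summable(2)[where \<gamma> = "\<lambda>(n,t). norm (F n t) * M" and r = "\<lambda>n. (\<Sum>\<^sub>\<infinity>t\<in>carrier G. norm (F n t)) * M"])
    fix n
    show "((\<lambda>t. case (n, t) of (n, t) \<Rightarrow> norm (F n t) * M) has_sum (\<Sum>\<^sub>\<infinity>t\<in>carrier G. norm (F n t)) * M) (carrier G)"
      using L1_norm_summable[OF FL] by (simp add: has_sum_cmult_left)
  next
    show "(\<lambda>n. (\<Sum>\<^sub>\<infinity>t\<in>carrier G. norm (F n t)) * M) summable_on UNIV"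
    proof (rule summable_on_comparison_test[where f = "\<lambda>n. nrm (F n) / b * M"])
      show "(\<lambda>n. nrm (F n) / b * M) summable_on UNIV"
        using Fs_div by (rule summable_on_cmult_left)
      fix n
      show "(\<Sum>\<^sub>\<infinity>t\<in>carrier G. norm (F n t)) * M \<le> nrm (F n) / b * M"
        using L1_norm_infsum_le[OF FL] M0 by (rule mult_right_mono)
      show "0 \<le> (\<Sum>\<^sub>\<infinity>t\<in>carrier G. norm (F n t)) * M"
        using M0 by (simp add: infsum_nonneg)
    qed
  next
    fix n t assume t: "t \<in> carrier G"
    show "0 \<le> (case (n, t) of (n, t) \<Rightarrow> norm (F n t) * M)" using M0 by simp
    have "norm (f (inv t \<otimes> s)) \<le> M" unfolding M_def using norm_le_nrm[OF f] t s by simp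
    then show "norm (case (n, t) of (n, t) \<Rightarrow> F n t * f (inv t \<otimes> s)) \<le> (case (n, t) of (n, t) \<Rightarrow> norm (F n t) * M)"
      by (simp add: norm_mult mult_left_mono)
  qed
  have "conv G (\<lambda>s. \<Sum>\<^sub>\<infinity>n. F n s) f s = (\<Sum>\<^sub>\<infinity>t\<in>carrier G. \<Sum>\<^sub>\<infinity>n. F n t * f (inv t \<otimes> s))"
    unfolding conv_def by (simp add: infsum_cmult_left')
  also have "\<dots> = (\<Sum>\<^sub>\<infinity>n. \<Sum>\<^sub>\<infinity>t\<in>carrier G. F n t * f (inv t \<otimes> s))"
    by (rule infsum_swap_banach[OF P, symmetric])
  also have "\<dots> = (\<Sum>\<^sub>\<infinity>n. conv G (F n) f s)" unfolding conv_def ..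
  finally show ?thesis .
qed

end


lemma pow_L1: "L1 x \<Longrightarrow> L1 (conv_pow G x n)"
  by (induction n) (auto simp: L1_delta conv_L1_nrm)

lemma pow_add:
  assumes x: "L1 x"
  shows "s \<in> carrier G \<Longrightarrow> conv_pow G x (n + m) s = conv G (conv_pow G x n) (conv_pow G x m) s"
proof (induction n arbitrary: s)
  case 0
  then show ?case by (simp add: conv_delta_left)
next
  case (Suc n)
  have "conv_pow G x (Suc n + m) s = conv G x (conv_pow G x (n + m)) s" by simp
  also have "\<dots> = conv G x (conv G (conv_pow G x n) (conv_pow G x m)) s"
    by (rule conv_cong_right[OF Suc.prems]) (rule Suc.IH)
  also have "\<dots> = conv G (conv G x (conv_pow G x n)) (conv_pow G x m) s"
    by (rule conv_assoc[symmetric]) (use x pow_L1[OF x] Suc.prems in auto)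
  finally show ?case by simp
qed

lemma pow_comm:
  assumes x: "L1 x" and s: "s \<in> carrier G"
  shows "conv G (conv_pow G x n) x s = conv_pow G x (Suc n) s"
proof -
  have "conv_pow G x (Suc n) s = conv_pow G x (n + 1) s" by simp
  also have "\<dots> = conv G (conv_pow G x n) (conv_pow G x 1) s" by (rule pow_add[OF x s])
  also have "\<dots> = conv G (conv_pow G x n) x s"
    by (rule conv_cong_right[OF s]) (simp add: conv_delta_right)
  finally show ?thesis by simp
qed

lemma nrm_pow_add:
  assumes x: "L1 x"
  shows "nrm (conv_pow G x (n + m)) \<le> K * nrm (conv_pow G x n) * nrm (conv_pow G x m)"
proof -
  have "nrm (conv_pow G x (n + m)) = nrm (conv G (conv_pow G x n) (conv_pow G x m))"
    by (rule nrm_cong) (rule pow_add[OF x])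
  also have "\<dots> \<le> K * nrm (conv_pow G x n) * nrm (conv_pow G x m)"
    using conv_L1_nrm[OF pow_L1[OF x] pow_L1[OF x]] by blast
  finally show ?thesis .
qed


lemma L1_scale:
  fixes f :: "'a \<Rightarrow> 'b::{real_normed_field,banach}"
  assumes "L1 f" shows "L1 (\<lambda>s. c * f s) \<and> nrm (\<lambda>s. c * f s) = norm c * nrm f"
proof -
  have e: "norm (c * f s) * v s = norm c * (norm (f s) * v s)" for s by (simp add: norm_mult)
  show ?thesis using assms unfolding L1_def nrm_def e
    by (simp add: summable_on_cmult_right infsum_cmult_right')
qed

context
  fixes \<mu> :: "'a \<Rightarrow> real"
  assumes \<mu>0: "\<And>s. s \<in> carrier G \<Longrightarrow> 0 \<le> \<mu> s"
    and \<mu>1: "(\<mu> has_sum 1) (carrier G)"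
    and \<mu>L: "L1 \<mu>"
begin

lemma Pr_nonneg: "0 \<le> conv_pow G \<mu> n s"
proof (induction n arbitrary: s)
  case 0 then show ?case by (simp add: delta_def)
next
  case (Suc n) then show ?case
    by (simp add: conv_def) (intro infsum_nonneg mult_nonneg_nonneg \<mu>0)
qed

lemma Pr_mass: "(conv_pow G \<mu> n has_sum 1) (carrier G)"
proof (induction n)
  case 0
  have "(delta G has_sum (delta G \<one> :: real)) (carrier G)"
    by (rule has_sum_single_point) (auto simp: delta_def)
  moreover have "delta G \<one> = (1::real)" by (simp add: delta_def)
  ultimately show ?case by simp
next
  case (Suc n)
  let ?g = "conv_pow G \<mu> n"
  have sm: "(\<lambda>(t,u). norm (\<mu> t * ?g u * 1)) summable_on (carrier G \<times> carrier G)"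
  proof -
    have "(\<lambda>p. norm ((\<lambda>(t,u). \<mu> t * ?g u * 1) p)) summable_on (carrier G \<times> carrier G)"
    proof (rule prod_summable(1)[where \<alpha> = "\<lambda>t. norm (\<mu> t)" and \<beta> = "\<lambda>u. norm (?g u)"])
      show "(\<lambda>t. norm (\<mu> t)) summable_on carrier G" by (rule L1_norm_summable[OF \<mu>L])
      show "(\<lambda>u. norm (?g u)) summable_on carrier G"
        using Suc.IH Pr_nonneg by (simp add: has_sum_imp_summable)
    qed (auto simp: abs_mult)
    then show ?thesis by (simp add: case_prod_unfold)
  qed
  have "(\<Sum>\<^sub>\<infinity>s\<in>carrier G. conv G \<mu> ?g s * 1) = (\<Sum>\<^sub>\<infinity>t\<in>carrier G. \<Sum>\<^sub>\<infinity>u\<in>carrier G. \<mu> t * ?g u * 1)"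
    by (rule conv_weighted(2)[OF sm])
  also have "\<dots> = (\<Sum>\<^sub>\<infinity>t\<in>carrier G. \<mu> t)"
    by (intro infsum_cong) (simp add: infsum_cmult_right' infsumI[OF Suc.IH])
  also have "\<dots> = 1" using \<mu>1 by (rule infsumI)
  finally have "infsum (conv_pow G \<mu> (Suc n)) (carrier G) = 1" by simp
  moreover have "conv_pow G \<mu> (Suc n) summable_on carrier G"
    using conv_weighted(1)[OF sm] by simp
  ultimately show ?case using has_sum_infsum by fastforce
qed

lemma cpow: "conv_pow G (\<lambda>s. complex_of_real (\<mu> s)) n s = complex_of_real (conv_pow G \<mu> n s)"
proof (induction n arbitrary: s)
  case 0 then show ?case by (simp add: delta_def)
next
  case (Suc n) then show ?case
    by (simp add: conv_def infsum_of_real_c[symmetric])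
qed

lemma L1_c: "L1 (\<lambda>s. complex_of_real (\<mu> s))"
  using \<mu>L unfolding L1_def by simp

lemma nrm_cpow: "nrm (conv_pow G (\<lambda>s. complex_of_real (\<mu> s)) n) = nrm (conv_pow G \<mu> n)"
  unfolding nrm_def cpow by simp

definition N :: "nat \<Rightarrow> real" where "N n = K * nrm (conv_pow G \<mu> n)"

lemma nrm_Pr_ge: "b \<le> nrm (conv_pow G \<mu> n)"
proof -
  have "(\<Sum>\<^sub>\<infinity>s\<in>carrier G. conv_pow G \<mu> n s * b) \<le> nrm (conv_pow G \<mu> n)"
    unfolding nrm_def
  proof (rule infsum_mono)
    show "(\<lambda>s. conv_pow G \<mu> n s * b) summable_on carrier G"
      using Pr_mass[of n] by (intro summable_on_cmult_left has_sum_imp_summable)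
    show "(\<lambda>s. norm (conv_pow G \<mu> n s) * v s) summable_on carrier G"
      using pow_L1[OF \<mu>L] unfolding L1_def by blast
    fix s assume "s \<in> carrier G"
    then show "conv_pow G \<mu> n s * b \<le> norm (conv_pow G \<mu> n s) * v s"
      using Pr_nonneg[of n s] v_ge by (simp add: mult_left_mono)
  qed
  moreover have "(\<Sum>\<^sub>\<infinity>s\<in>carrier G. conv_pow G \<mu> n s * b) = b"
    using Pr_mass[of n] by (simp add: infsum_cmult_left' infsumI)
  ultimately show ?thesis by simp
qed

lemma N_pos: "0 < N n"
  unfolding N_def using nrm_Pr_ge[of n] b_pos K_pos by simp

lemma N_mult: "N (n + m) \<le> N n * N m"
  unfolding N_def using nrm_pow_add[OF \<mu>L, of n m] K_pos
  by (simp add: algebra_simps mult_left_mono)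

lemma N0: "1 \<le> N 0"
  unfolding N_def using Kv1 nrm_delta[where 'b = real] by simp

definition rho :: real where "rho = Inf ((\<lambda>n. root n (N n)) ` {n. 1 \<le> n})"

lemma rho_bdd: "bdd_below ((\<lambda>n. root n (N n)) ` {n. 1 \<le> n})"
  by (rule bdd_belowI[where m = 0]) (use N_pos in \<open>auto intro: less_imp_le\<close>)

lemma rho_nonneg: "0 \<le> rho"
  unfolding rho_def by (rule cInf_greatest) (use N_pos in \<open>auto intro: less_imp_le\<close>)

lemma rho_le: "1 \<le> n \<Longrightarrow> rho \<le> root n (N n)"
  unfolding rho_def by (rule cInf_lower[OF _ rho_bdd]) auto

lemma rho_pow: "rho ^ n \<le> N n"
proof (cases "n = 0")
  case True then show ?thesis using N0 by simp
next
  case False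
  then have "rho ^ n \<le> (root n (N n)) ^ n"
    using rho_le[of n] rho_nonneg by (intro power_mono) auto
  also have "\<dots> = N n" using False N_pos[of n] by (simp add: real_root_pow_pos2 less_imp_le)
  finally show ?thesis .
qed

lemma rho_less: "rho < r \<Longrightarrow> \<exists>m. 1 \<le> m \<and> root m (N m) < r"
  unfolding rho_def by (drule cInf_lessD[rotated]) auto

lemma N_bound:
  assumes m: "1 \<le> m"
  shows "\<exists>B. \<forall>n. N n \<le> B * root m (N m) ^ n"
proof -
  define l where "l = root m (N m)"
  have l0: "0 < l" unfolding l_def using N_pos m by simp
  have lm: "l ^ m = N m" unfolding l_def using N_pos[of m] m by (simp add: real_root_pow_pos2 less_imp_le)
  define B where "B = Max ((\<lambda>j. N j / l ^ j) ` {..<m})"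
  have "N n \<le> B * l ^ n" for n
  proof (induction n rule: less_induct)
    case (less n)
    show ?case
    proof (cases "n < m")
      case True
      then have "N n / l ^ n \<le> B" unfolding B_def by (intro Max_ge) auto
      then show ?thesis using l0 by (simp add: field_simps)
    next
      case False
      then have n: "n = m + (n - m)" by simp
      have "N n \<le> N m * N (n - m)" using N_mult[of m "n - m"] n by simp
      also have "\<dots> \<le> N m * (B * l ^ (n - m))"
        using less.IH[of "n - m"] m False N_pos[of m] by (intro mult_left_mono) auto
      also have "\<dots> = B * l ^ (m + (n - m))" unfolding lm[symmetric] by (simp add: power_add)
      finally show ?thesis using n by simp
    qed
  qed
  then show ?thesis unfolding l_def by blast
qed


abbreviation "xc \<equiv> (\<lambda>s. complex_of_real (\<mu> s))"

definition Fz :: "complex \<Rightarrow> nat \<Rightarrow> 'a \<Rightarrow> complex" where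
  "Fz z n = (\<lambda>s. (inverse z) ^ (Suc n) * conv_pow G xc n s)"

definition Rz :: "complex \<Rightarrow> 'a \<Rightarrow> complex" where
  "Rz z = (\<lambda>s. \<Sum>\<^sub>\<infinity>n. Fz z n s)"

lemma Fz_L1: "L1 (Fz z n)"
  unfolding Fz_def using L1_scale[OF pow_L1[OF L1_c]] by blast

lemma nrm_Fz: "nrm (Fz z n) = norm (inverse z) ^ (Suc n) * (N n / K)"
  unfolding Fz_def using L1_scale[OF pow_L1[OF L1_c], of "(inverse z) ^ (Suc n)" n] K_pos
  by (simp add: nrm_cpow N_def norm_power norm_mult)

lemma Fz_sum:
  assumes z: "rho < norm z"
  shows "(\<lambda>n. nrm (Fz z n)) summable_on UNIV"
proof -
  obtain m where m: "1 \<le> m" "root m (N m) < norm z" using rho_less[OF z] by blast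
  define l where "l = root m (N m)"
  obtain B where B: "\<And>n. N n \<le> B * l ^ n" using N_bound[OF m(1)] unfolding l_def by blast
  have l0: "0 < l" unfolding l_def using N_pos m by simp
  have z0: "0 < norm z" using l0 m(2) unfolding l_def by linarith
  have B0: "0 < B" using B[of 0] N_pos[of 0] by simp
  define q where "q = l / norm z"
  have q: "0 \<le> q" "q < 1" unfolding q_def using l0 z0 m(2) l_def by auto
  define c where "c = B / (K * norm z)"
  have c0: "0 \<le> c" unfolding c_def using B0 K_pos z0 by simp
  have "(\<lambda>n. c * q ^ n) summable_on UNIV"
    using q c0 by (subst summable_on_UNIV_nonneg_real_iff) (auto intro!: summable_mult summable_geometric)
  then show ?thesis
  proof (rule summable_on_comparison_test)
    fix n :: nat
    show "0 \<le> nrm (Fz z n)" by (rule nrm_nonneg)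
    have "nrm (Fz z n) = (1 / norm z) ^ Suc n * (N n / K)"
      by (simp add: nrm_Fz norm_inverse divide_inverse)
    also have "\<dots> \<le> (1 / norm z) ^ Suc n * (B * l ^ n / K)"
      using B[of n] K_pos z0 by (intro mult_left_mono divide_right_mono) auto
    also have "\<dots> = c * q ^ n" unfolding c_def q_def using z0 K_pos
      by (simp add: field_simps power_divide)
    finally show "nrm (Fz z n) \<le> c * q ^ n" .
  qed
qed

lemma Rz_L1: "rho < norm z \<Longrightarrow> L1 (Rz z)"
  unfolding Rz_def using series_L1_nrm[OF Fz_L1 Fz_sum] by blast

lemma Rz_pt: "rho < norm z \<Longrightarrow> s \<in> carrier G \<Longrightarrow> (\<lambda>n. Fz z n s) summable_on UNIV"
  using series_pt[OF Fz_L1 Fz_sum] by blast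

lemma telescope:
  assumes z: "rho < norm z" and s: "s \<in> carrier G"
  shows "z * Rz z s - (\<Sum>\<^sub>\<infinity>n. inverse z ^ Suc n * conv_pow G xc (Suc n) s) = delta G s"
proof -
  have z0: "z \<noteq> 0" using z rho_nonneg by auto
  define g where "g = (\<lambda>n. inverse z ^ n * conv_pow G xc n s)"
  have gF: "g n = z * Fz z n s" for n unfolding g_def Fz_def using z0 by (simp add: field_simps)
  have gs: "g summable_on UNIV" unfolding gF by (intro summable_on_cmult_right Rz_pt[OF z s])
  have "z * Rz z s = infsum g UNIV" unfolding Rz_def gF by (simp add: infsum_cmult_right')
  also have "\<dots> = g 0 + (\<Sum>\<^sub>\<infinity>n. g (Suc n))" by (rule infsum_shift_nat[OF gs])
  finally show ?thesis by (simp add: g_def)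
qed

lemma Rz_left:
  assumes z: "rho < norm z" and s: "s \<in> carrier G"
  shows "conv G (\<lambda>s. z * delta G s - xc s) (Rz z) s = delta G s"
proof -
  have e: "(\<lambda>s. z * delta G s - xc s) = (\<lambda>s. z * delta G s + (-1) * xc s)" by auto
  have "conv G (\<lambda>s. z * delta G s - xc s) (Rz z) s = z * conv G (delta G) (Rz z) s + (-1) * conv G xc (Rz z) s"
    unfolding e by (rule conv_lin_left[OF L1_delta L1_c Rz_L1[OF z] s])
  also have "conv G (delta G) (Rz z) s = Rz z s" by (rule conv_delta_left[OF s])
  also have "conv G xc (Rz z) s = (\<Sum>\<^sub>\<infinity>n. conv G xc (Fz z n) s)"
    unfolding Rz_def by (rule series_conv_right[OF Fz_L1 Fz_sum[OF z] L1_c s])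
  also have "\<dots> = (\<Sum>\<^sub>\<infinity>n. inverse z ^ Suc n * conv_pow G xc (Suc n) s)"
    unfolding Fz_def conv_scale_right by simp
  finally show ?thesis using telescope[OF z s] by simp
qed

lemma Rz_right:
  assumes z: "rho < norm z" and s: "s \<in> carrier G"
  shows "conv G (Rz z) (\<lambda>s. z * delta G s - xc s) s = delta G s"
proof -
  have e: "(\<lambda>s. z * delta G s - xc s) = (\<lambda>s. z * delta G s + (-1) * xc s)" by auto
  have "conv G (Rz z) (\<lambda>s. z * delta G s - xc s) s = z * conv G (Rz z) (delta G) s + (-1) * conv G (Rz z) xc s"
    unfolding e by (rule conv_lin_right[OF Rz_L1[OF z] L1_delta L1_c s])
  also have "conv G (Rz z) (delta G) s = Rz z s" by (rule conv_delta_right[OF s])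
  also have "conv G (Rz z) xc s = (\<Sum>\<^sub>\<infinity>n. conv G (Fz z n) xc s)"
    unfolding Rz_def by (rule series_conv_left[OF Fz_L1 Fz_sum[OF z] L1_c s])
  also have "\<dots> = (\<Sum>\<^sub>\<infinity>n. inverse z ^ Suc n * conv_pow G xc (Suc n) s)"
    unfolding Fz_def conv_scale_left pow_comm[OF L1_c s] ..
  finally show ?thesis using telescope[OF z s] by simp
qed

lemma not_spec: "rho < norm z \<Longrightarrow> z \<notin> l1_spectrum G v xc"
  unfolding l1_spectrum_def l1_invertible_def l1_def
  using Rz_L1[of z] Rz_left[of z] Rz_right[of z] unfolding L1_def by blast


lemma Rz_real:
  assumes t: "0 < t" "rho < t" and s: "s \<in> carrier G"
  shows "(\<lambda>n. inverse t ^ Suc n * conv_pow G \<mu> n s) summable_on UNIV"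
    and "Rz (complex_of_real t) s = complex_of_real (\<Sum>\<^sub>\<infinity>n. inverse t ^ Suc n * conv_pow G \<mu> n s)"
proof -
  have tz: "rho < norm (complex_of_real t)" using t by simp
  have e: "Fz (complex_of_real t) n s = complex_of_real (inverse t ^ Suc n * conv_pow G \<mu> n s)" for n
    unfolding Fz_def cpow by simp
  show "(\<lambda>n. inverse t ^ Suc n * conv_pow G \<mu> n s) summable_on UNIV"
    using summable_on_Re[OF Rz_pt[OF tz s]] by (simp only: e Re_complex_of_real)
  show "Rz (complex_of_real t) s = complex_of_real (\<Sum>\<^sub>\<infinity>n. inverse t ^ Suc n * conv_pow G \<mu> n s)"
    unfolding Rz_def e infsum_of_real_c ..
qed

lemma nrm_Rz_lower:
  assumes t: "rho < t"
  shows "1 / (K * (t - rho)) \<le> nrm (Rz (complex_of_real t))"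
proof -
  have t0: "0 < t" using t rho_nonneg by simp
  define X where "X = nrm (Rz (complex_of_real t))"
  have tz: "rho < norm (complex_of_real t)" using t0 t by simp
  have smn: "(\<lambda>s. inverse t ^ Suc n * (conv_pow G \<mu> n s * v s)) summable_on carrier G" for n
  proof -
    have "(\<lambda>s. norm (conv_pow G \<mu> n s) * v s) summable_on carrier G"
      using pow_L1[OF \<mu>L, of n] unfolding L1_def .
    then have "(\<lambda>s. conv_pow G \<mu> n s * v s) summable_on carrier G"
      by (rule summable_on_cong[THEN iffD1, rotated]) (simp add: abs_of_nonneg Pr_nonneg)
    then show ?thesis by (rule summable_on_cmult_right)
  qed
  have partial: "(\<Sum>n<M. inverse t ^ Suc n * (rho ^ n / K)) \<le> X" for M
  proof -
    have "(\<Sum>n<M. inverse t ^ Suc n * (rho ^ n / K)) \<le> (\<Sum>n<M. inverse t ^ Suc n * nrm (conv_pow G \<mu> n))"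
    proof (rule sum_mono)
      fix n
      have "rho ^ n / K \<le> nrm (conv_pow G \<mu> n)" using rho_pow[of n] K_pos unfolding N_def
        by (simp add: pos_divide_le_eq mult.commute)
      then show "inverse t ^ Suc n * (rho ^ n / K) \<le> inverse t ^ Suc n * nrm (conv_pow G \<mu> n)"
        using t0 by (intro mult_left_mono) auto
    qed
    also have "\<dots> = (\<Sum>n<M. \<Sum>\<^sub>\<infinity>s\<in>carrier G. inverse t ^ Suc n * (conv_pow G \<mu> n s * v s))"
    proof (intro sum.cong refl)
      fix n
      have "nrm (conv_pow G \<mu> n) = (\<Sum>\<^sub>\<infinity>s\<in>carrier G. conv_pow G \<mu> n s * v s)"
        unfolding nrm_def by (intro infsum_cong) (simp add: abs_of_nonneg Pr_nonneg)
      then show "inverse t ^ Suc n * nrm (conv_pow G \<mu> n) = (\<Sum>\<^sub>\<infinity>s\<in>carrier G. inverse t ^ Suc n * (conv_pow G \<mu> n s * v s))"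
        by (simp only: infsum_cmult_right')
    qed
    also have "\<dots> = (\<Sum>\<^sub>\<infinity>s\<in>carrier G. \<Sum>n<M. inverse t ^ Suc n * (conv_pow G \<mu> n s * v s))"
      using infsum_sum_fin[of "\<lambda>n s. inverse t ^ Suc n * (conv_pow G \<mu> n s * v s)" "carrier G" M] smn
      by simp
    also have "\<dots> \<le> X" unfolding X_def nrm_def
    proof (rule infsum_mono)
      show "(\<lambda>s. \<Sum>n<M. inverse t ^ Suc n * (conv_pow G \<mu> n s * v s)) summable_on carrier G"
        using infsum_sum_fin[of "\<lambda>n s. inverse t ^ Suc n * (conv_pow G \<mu> n s * v s)" "carrier G" M] smn by simp
      show "(\<lambda>s. norm (Rz (complex_of_real t) s) * v s) summable_on carrier G"
        using Rz_L1[OF tz] unfolding L1_def .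
      fix s assume s: "s \<in> carrier G"
      have nn: "0 \<le> inverse t ^ Suc n * conv_pow G \<mu> n s" for n using t0 Pr_nonneg by simp
      have "(\<Sum>n<M. inverse t ^ Suc n * conv_pow G \<mu> n s) \<le> (\<Sum>\<^sub>\<infinity>n. inverse t ^ Suc n * conv_pow G \<mu> n s)"
        by (rule finite_sum_le_infsum[OF Rz_real(1)[OF t0 t s]]) (use nn in auto)
      also have "\<dots> = norm (Rz (complex_of_real t) s)"
        unfolding Rz_real(2)[OF t0 t s] using nn by (simp add: infsum_nonneg)
      finally have "(\<Sum>n<M. inverse t ^ Suc n * conv_pow G \<mu> n s) * v s \<le> norm (Rz (complex_of_real t) s) * v s"
        using v_pos[OF s] by (intro mult_right_mono) auto
      then show "(\<Sum>n<M. inverse t ^ Suc n * (conv_pow G \<mu> n s * v s)) \<le> norm (Rz (complex_of_real t) s) * v s"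
        by (simp add: sum_distrib_right mult.assoc)
    qed
    finally show ?thesis .
  qed
  have q: "norm (rho / t) < 1" using t t0 rho_nonneg by simp
  have e: "inverse t ^ Suc n * (rho ^ n / K) = (inverse t / K) * (rho / t) ^ n" for n
    by (simp add: power_divide divide_inverse power_inverse power_mult_distrib mult_ac)
  have sums: "(\<lambda>n. inverse t ^ Suc n * (rho ^ n / K)) sums ((inverse t / K) * (1 / (1 - rho / t)))"
    unfolding e by (intro sums_mult geometric_sums q)
  have "(inverse t / K) * (1 / (1 - rho / t)) \<le> X"
    using sums_le[OF _ sums] suminf_le_const[OF sums_summable[OF sums] partial] sums_unique[OF sums] by simp
  moreover have "(inverse t / K) * (1 / (1 - rho / t)) = 1 / (K * (t - rho))"
  proof -
    have "1 - rho / t = (t - rho) / t" using t0 by (simp add: diff_divide_distrib)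
    then show ?thesis using t0 t K_pos by (simp add: divide_inverse mult_ac)
  qed
  ultimately show ?thesis unfolding X_def by simp
qed


lemma rho_spec: "complex_of_real rho \<in> l1_spectrum G v xc"
proof (rule ccontr)
  let ?rc = "complex_of_real rho"
  assume "?rc \<notin> l1_spectrum G v xc"
  then obtain g where gL: "L1 g"
    and gl: "\<And>s. s \<in> carrier G \<Longrightarrow> conv G (\<lambda>s. ?rc * delta G s - xc s) g s = delta G s"
    unfolding l1_spectrum_def l1_invertible_def l1_def L1_def by blast
  define a where "a = nrm g"
  have a0: "0 \<le> a" unfolding a_def by (rule nrm_nonneg)
  define \<eta> where "\<eta> = 1 / (4 * K * (a + 1))"
  have \<eta>0: "0 < \<eta>" unfolding \<eta>_def using K_pos a0 by simp
  define t where "t = rho + \<eta>"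
  have t: "rho < t" unfolding t_def using \<eta>0 by simp
  let ?tc = "complex_of_real t"
  have tz: "rho < norm ?tc" using t rho_nonneg by simp
  define R where "R = Rz ?tc"
  have RL: "L1 R" unfolding R_def by (rule Rz_L1[OF tz])
  define A where "A = (\<lambda>s. ?rc * delta G s - xc s)"
  define T where "T = (\<lambda>s. ?tc * delta G s - xc s)"
  have A_L1: "L1 A"
  proof -
    have "A = (\<lambda>s. ?rc * delta G s + (-1) * xc s)" unfolding A_def by auto
    then show ?thesis using L1_lin[OF L1_delta L1_c, of ?rc "-1"] by simp
  qed
  have T_L1: "L1 T"
  proof -
    have "T = (\<lambda>s. ?tc * delta G s + (-1) * xc s)" unfolding T_def by auto
    then show ?thesis using L1_lin[OF L1_delta L1_c, of ?tc "-1"] by simp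
  qed
  have A_eq: "A = (\<lambda>s. 1 * T s + (?rc - ?tc) * delta G s)"
    unfolding A_def T_def by (auto simp: algebra_simps)
  have RA: "conv G R A u = 1 * delta G u + (?rc - ?tc) * R u" if u: "u \<in> carrier G" for u
  proof -
    have "conv G R A u = 1 * conv G R T u + (?rc - ?tc) * conv G R (delta G) u"
      unfolding A_eq by (rule conv_lin_right[OF RL T_L1 L1_delta u])
    also have "conv G R T u = delta G u" unfolding R_def T_def by (rule Rz_right[OF tz u])
    also have "conv G R (delta G) u = R u" by (rule conv_delta_right[OF u])
    finally show ?thesis by simp
  qed
  have key: "R s = 1 * g s + (?rc - ?tc) * conv G R g s" if s: "s \<in> carrier G" for s
  proof -
    have "R s = conv G R (delta G) s" by (rule conv_delta_right[OF s, symmetric])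
    also have "\<dots> = conv G R (conv G A g) s"
      by (rule conv_cong_right[OF s]) (simp add: A_def gl)
    also have "\<dots> = conv G (conv G R A) g s"
      by (rule conv_assoc[OF RL A_L1 gL s, symmetric])
    also have "\<dots> = conv G (\<lambda>u. 1 * delta G u + (?rc - ?tc) * R u) g s"
      by (rule conv_cong_left) (rule RA)
    also have "\<dots> = 1 * conv G (delta G) g s + (?rc - ?tc) * conv G R g s"
      by (rule conv_lin_left[OF L1_delta RL gL s])
    also have "conv G (delta G) g s = g s" by (rule conv_delta_left[OF s])
    finally show ?thesis .
  qed
  have cL: "L1 (conv G R g) \<and> nrm (conv G R g) \<le> K * nrm R * nrm g" by (rule conv_L1_nrm[OF RL gL])
  have nd: "norm (?rc - ?tc) = \<eta>" unfolding t_def using \<eta>0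
    by (simp flip: of_real_diff)
  have "nrm R = nrm (\<lambda>s. 1 * g s + (?rc - ?tc) * conv G R g s)"
    by (rule nrm_cong) (rule key)
  also have "\<dots> \<le> norm (1::complex) * nrm g + norm (?rc - ?tc) * nrm (conv G R g)"
    using L1_lin[OF gL conjunct1[OF cL], of 1 "?rc - ?tc"] by blast
  also have "\<dots> \<le> a + \<eta> * (K * nrm R * a)"
    unfolding nd a_def using cL \<eta>0 by (simp add: mult_left_mono)
  finally have up: "nrm R \<le> a + \<eta> * (K * nrm R * a)" .
  have low: "1 / (K * (t - rho)) \<le> nrm R" unfolding R_def by (rule nrm_Rz_lower[OF t])
  have low': "4 * (a + 1) \<le> nrm R" using low unfolding t_def \<eta>_def using K_pos a0 by simp
  have d: "0 < 4 * K * (a + 1)" using K_pos a0 by simp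
  have "\<eta> * K * a = (K * a) / (4 * K * (a + 1))" unfolding \<eta>_def by simp
  also have "\<dots> \<le> 1 / 4" using d K_pos by (simp add: pos_divide_le_eq algebra_simps)
  finally have "\<eta> * K * a \<le> 1 / 4" .
  then have "\<eta> * (K * nrm R * a) \<le> nrm R / 4"
    using nrm_nonneg[of R] mult_right_mono[of "\<eta> * K * a" "1/4" "nrm R"] by (simp add: mult_ac)
  then have "nrm R \<le> a + nrm R / 4" using up by linarith
  then have "3 * nrm R \<le> 4 * a" by simp
  then show False using low' a0 by simp
qed

lemma specrad: "l1_spectral_radius G v xc = rho"
  unfolding l1_spectral_radius_def
proof (rule cSup_eq_maximum)
  show "rho \<in> norm ` l1_spectrum G v xc"
    using rho_spec rho_nonneg by (intro image_eqI[where x = "complex_of_real rho"]) auto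
  fix y assume "y \<in> norm ` l1_spectrum G v xc"
  then obtain z where "z \<in> l1_spectrum G v xc" "y = norm z" by auto
  then show "y \<le> rho" using not_spec[of z] by force
qed

end

end

lemma exp_upper: "exp (x::real) \<le> 1 + x + x\<^sup>2 * exp \<bar>x\<bar>"
proof -
  obtain t where t: "\<bar>t\<bar> \<le> \<bar>x\<bar>" "exp x = (\<Sum>m<2. x ^ m / fact m) + exp t / fact 2 * x ^ 2"
    using Maclaurin_exp_le[of x 2] by blast
  have "exp t \<le> exp \<bar>x\<bar>" using t(1) by simp
  then have "exp t / 2 \<le> exp \<bar>x\<bar>" using exp_gt_zero[of t] by linarith
  then have "exp t / 2 * x ^ 2 \<le> exp \<bar>x\<bar> * x ^ 2"
    by (intro mult_right_mono) auto
  then show ?thesis using t(2) by (simp add: numeral_2_eq_2 mult.commute)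
qed

lemma exp_tangent: "exp m * (1 + (x - m)) \<le> exp (x::real)"
proof -
  have "exp m * (1 + (x - m)) \<le> exp m * exp (x - m)"
    by (intro mult_left_mono) auto
  also have "\<dots> = exp x" by (simp add: exp_diff)
  finally show ?thesis .
qed

lemma ln_le_powr: assumes "0 < (x::real)" "0 < (q::real)" shows "ln x \<le> q * x powr (1/q)"
proof -
  have "ln x = q * ln (x powr (1/q))" using assms by (simp add: field_simps)
  also have "\<dots> \<le> q * (x powr (1/q) - 1)"
    using assms by (intro mult_left_mono ln_le_minus_one) auto
  also have "\<dots> \<le> q * x powr (1/q)" using assms by (simp add: field_simps)
  finally show ?thesis .
qed

lemma fekete:
  fixes c :: "nat \<Rightarrow> real"
  assumes sub: "\<And>n m. c (n + m) \<le> c n + c m"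
    and bdd: "\<And>n. 1 \<le> n \<Longrightarrow> B \<le> c n / n"
  shows "(\<lambda>n. c n / n) \<longlonglongrightarrow> Inf ((\<lambda>n. c n / n) ` {n. 1 \<le> n})"
proof -
  define S where "S = (\<lambda>n. c n / n) ` {n. 1 \<le> n}"
  define Ly where "Ly = Inf S"
  have Sne: "S \<noteq> {}" unfolding S_def by auto
  have Sbdd: "bdd_below S" unfolding S_def by (rule bdd_belowI[where m = B]) (auto intro: bdd)
  have low: "Ly \<le> c n / n" if "1 \<le> n" for n
    unfolding Ly_def using that by (intro cInf_lower[OF _ Sbdd]) (auto simp: S_def)
  show ?thesis unfolding S_def[symmetric] Ly_def[symmetric]
  proof (rule LIMSEQ_I)
    fix r :: real assume r: "0 < r"
    obtain m where m: "1 \<le> m" "c m / m < Ly + r / 2"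
    proof -
      have "Inf S < Ly + r / 2" unfolding Ly_def using r by simp
      then obtain y where "y \<in> S" "y < Ly + r / 2" using cInf_lessD[OF Sne] by blast
      then show ?thesis using that unfolding S_def by auto
    qed
    define D where "D = Max (c ` {1..m})"
    have Dge: "c j \<le> D" if "1 \<le> j" "j \<le> m" for j unfolding D_def using that by (intro Max_ge) auto
    have bound: "c n \<le> real ((n - 1) div m) * c m + D" if n1: "1 \<le> n" for n
      using n1
    proof (induction n rule: less_induct)
      case (less n)
      show ?case
      proof (cases "n \<le> m")
        case True
        have "n - 1 < m" using True less.prems by linarith
        then have "(n - 1) div m = 0" by (rule div_less)
        moreover have "c n \<le> D" using Dge[of n] True less.prems by blast
        ultimately show ?thesis by simp
      next
        case False
        have nm: "1 \<le> n - m" using False by linarith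
        have nl: "n - m < n" using False m by linarith
        have n: "n = m + (n - m)" using False by linarith
        have e1: "n - 1 = (n - m - 1) + m" using False m by linarith
        have m0: "m \<noteq> 0" using m by linarith
        have q: "(n - 1) div m = (n - m - 1) div m + 1"
          unfolding e1 by (rule div_add_self2[OF m0])
        have IH: "c (n - m) \<le> real ((n - m - 1) div m) * c m + D" by (rule less.IH[OF nl nm])
        have "c n \<le> c m + c (n - m)" using sub[of m "n - m"] n by simp
        also have "\<dots> \<le> c m + (real ((n - m - 1) div m) * c m + D)" using IH by linarith
        also have "\<dots> = real ((n - 1) div m) * c m + D" unfolding q by (simp add: algebra_simps)
        finally show ?thesis .
      qed
    qed
    define E where "E = \<bar>c m\<bar> + \<bar>D\<bar>"
    obtain N where N: "E / r * 2 < real N" using reals_Archimedean2 by blast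
    show "\<exists>N. \<forall>n\<ge>N. norm (c n / real n - Ly) < r"
    proof (intro exI allI impI)
      fix n assume nN: "Suc N \<le> n"
      then have n1: "1 \<le> n" by simp
      have npos: "0 < real n" using n1 by simp
      define q where "q = (n - 1) div m"
      have dm: "q * m + (n - 1) mod m = n - 1" unfolding q_def by (rule div_mult_mod_eq)
      have mm: "(n - 1) mod m < m" using m by simp
      have q1: "q * m \<le> n" using dm by linarith
      have q2: "n \<le> q * m + m" using dm mm n1 by linarith
      have "real q * c m \<le> real n / m * c m + \<bar>c m\<bar>"
      proof -
        have "real (q * m) \<le> real n" using q1 by (simp only: of_nat_le_iff)
        then have a: "real q * m \<le> n" by simp
        have "real n \<le> real (q * m + m)" using q2 by (simp only: of_nat_le_iff)
        then have b: "real n \<le> real q * m + m" by simp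
        have mpos: "0 < real m" using m by simp
        have "\<bar>real q - real n / m\<bar> \<le> 1"
          using a b mpos by (simp add: abs_le_iff field_simps)
        then have "\<bar>real q - real n / m\<bar> * \<bar>c m\<bar> \<le> 1 * \<bar>c m\<bar>"
          by (intro mult_right_mono) auto
        moreover have "(real q - real n / m) * c m \<le> \<bar>real q - real n / m\<bar> * \<bar>c m\<bar>"
          by (metis abs_ge_self abs_mult)
        ultimately have "(real q - real n / m) * c m \<le> \<bar>c m\<bar>" by simp
        then show ?thesis by (simp add: algebra_simps)
      qed
      then have "c n \<le> real n / m * c m + E" using bound[OF n1] unfolding q_def E_def by linarith
      then have "c n / n \<le> c m / m + E / n" using npos by (simp add: field_simps)
      moreover have "E / n < r / 2"
      proof -
        have "E / r * 2 < real n" using N nN by linarith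
        then show ?thesis using r npos by (simp add: field_simps)
      qed
      ultimately have "c n / n < Ly + r" using m(2) by linarith
      moreover have "Ly \<le> c n / n" by (rule low[OF n1])
      ultimately show "norm (c n / real n - Ly) < r" by simp
    qed
  qed
qed


locale lyap = group G for G :: "('a,'m) monoid_scheme" (structure) +
  fixes w :: "'a \<Rightarrow> real" and \<mu> :: "'a \<Rightarrow> real" and a C p0 :: real
  assumes a_pos: "0 < a" and w_ge: "\<And>s. s \<in> carrier G \<Longrightarrow> a \<le> w s"
    and C_pos: "0 < C" and w_sub: "\<And>s t. s \<in> carrier G \<Longrightarrow> t \<in> carrier G \<Longrightarrow> w (s \<otimes> t) \<le> C * w s * w t"
    and \<mu>0: "\<And>s. s \<in> carrier G \<Longrightarrow> 0 \<le> \<mu> s" and \<mu>1: "(\<mu> has_sum 1) (carrier G)"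
    and p0: "1 \<le> p0" and \<mu>w: "(\<lambda>s. \<mu> s * w s powr (1/p0)) summable_on carrier G"
begin

lemma w_pos: "s \<in> carrier G \<Longrightarrow> 0 < w s"
  using w_ge a_pos by force

lemma wc: assumes p: "0 < p" shows "wconv G (\<lambda>s. w s powr (1/p)) (a powr (1/p)) (C powr (1/p))"
proof (intro wconv.intro wconv_axioms.intro)
  show "group G" by (rule is_group)
  show "0 < a powr (1/p)" using a_pos by simp
  fix s assume s: "s \<in> carrier G"
  show "a powr (1/p) \<le> w s powr (1/p)" using w_ge[OF s] a_pos p by (intro powr_mono2) auto
  fix t assume t: "t \<in> carrier G"
  have "w (s \<otimes> t) powr (1/p) \<le> (C * w s * w t) powr (1/p)"
    using w_sub[OF s t] w_pos[of "s \<otimes> t"] s t p by (intro powr_mono2) auto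
  also have "\<dots> = C powr (1/p) * w s powr (1/p) * w t powr (1/p)"
    using C_pos w_pos[OF s] w_pos[OF t] by (simp add: powr_mult)
  finally show "w (s \<otimes> t) powr (1/p) \<le> C powr (1/p) * w s powr (1/p) * w t powr (1/p)" .
qed

sublocale W0: wconv G "\<lambda>s. w s powr (1/p0)" "a powr (1/p0)" "C powr (1/p0)"
  by (rule wc) (use p0 in simp)

abbreviation "v0 \<equiv> (\<lambda>s. w s powr (1/p0))"
abbreviation "Pr \<equiv> conv_pow G \<mu>"
abbreviation "y \<equiv> (\<lambda>s. ln (w s))"

lemma \<mu>L0: "W0.L1 \<mu>"
  unfolding W0.L1_def using \<mu>w by (rule summable_on_cong[THEN iffD1, rotated]) (simp add: \<mu>0)

lemma Pr_nonneg: "0 \<le> Pr n s" by (rule W0.Pr_nonneg[OF \<mu>0 \<mu>1 \<mu>L0])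
lemma Pr_mass: "(Pr n has_sum 1) (carrier G)" by (rule W0.Pr_mass[OF \<mu>0 \<mu>1 \<mu>L0])
lemma Pr_summable: "Pr n summable_on carrier G" using Pr_mass has_sum_imp_summable by blast
lemma Pr_sum1: "infsum (Pr n) (carrier G) = 1" using Pr_mass infsumI by blast

lemma Pr_v0: "(\<lambda>s. Pr n s * v0 s) summable_on carrier G"
  using W0.pow_L1[OF \<mu>L0, of n] unfolding W0.L1_def
  by (rule summable_on_cong[THEN iffD1, rotated]) (simp add: Pr_nonneg)

lemma y_ge: assumes "s \<in> carrier G" shows "ln a \<le> y s"
  using w_ge[OF assms] a_pos by simp

lemma y_le: "s \<in> carrier G \<Longrightarrow> y s \<le> p0 * v0 s"
  using ln_le_powr[of "w s" p0] w_pos p0 by simp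

lemma y_abs: "s \<in> carrier G \<Longrightarrow> \<bar>y s\<bar> \<le> \<bar>ln a\<bar> + p0 * v0 s"
  using y_ge y_le p0 by (smt (verit) powr_ge_zero mult_nonneg_nonneg)

lemma lin_summable:
  fixes f g :: "'a \<Rightarrow> real"
  assumes "f summable_on carrier G" "g summable_on carrier G"
  shows "(\<lambda>s. c * f s + d * g s) summable_on carrier G"
  using assms by (intro summable_on_add summable_on_cmult_right)

lemma lin_infsum:
  assumes "f summable_on carrier G" "g summable_on carrier G"
  shows "(\<Sum>\<^sub>\<infinity>s\<in>carrier G. c * f s + d * (g s :: real)) = c * infsum f (carrier G) + d * infsum g (carrier G)"
  using assms by (simp add: infsum_add summable_on_cmult_right infsum_cmult_right')

lemma Py_summable: "(\<lambda>s. Pr n s * y s) summable_on carrier G"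
proof -
  have "(\<lambda>s. norm (Pr n s * y s)) summable_on carrier G"
  proof (rule summable_on_comparison_test)
    show "(\<lambda>s. \<bar>ln a\<bar> * Pr n s + p0 * (Pr n s * v0 s)) summable_on carrier G"
      by (rule lin_summable[OF Pr_summable Pr_v0])
    fix s assume s: "s \<in> carrier G"
    have "\<bar>Pr n s * y s\<bar> = Pr n s * \<bar>y s\<bar>" using Pr_nonneg by (simp add: abs_mult)
    also have "\<dots> \<le> Pr n s * (\<bar>ln a\<bar> + p0 * v0 s)" using y_abs[OF s] Pr_nonneg by (intro mult_left_mono) auto
    finally show "norm (Pr n s * y s) \<le> \<bar>ln a\<bar> * Pr n s + p0 * (Pr n s * v0 s)"
      by (simp add: algebra_simps)
  qed simp
  then show ?thesis by (rule abs_summable_summable)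
qed

definition L :: "nat \<Rightarrow> real" where "L n = (\<Sum>\<^sub>\<infinity>s\<in>carrier G. Pr n s * y s)"

lemma L_ge: "ln a \<le> L n"
proof -
  have "(\<Sum>\<^sub>\<infinity>s\<in>carrier G. ln a * Pr n s) \<le> L n" unfolding L_def
    by (rule infsum_mono[OF summable_on_cmult_right[OF Pr_summable] Py_summable])
       (use y_ge Pr_nonneg in \<open>simp add: mult.commute[of "ln a"] mult_left_mono\<close>)
  then show ?thesis by (simp add: infsum_cmult_right' Pr_sum1)
qed


lemma y_sub: assumes t: "t \<in> carrier G" and u: "u \<in> carrier G"
  shows "y (t \<otimes> u) \<le> ln C + y t + y u"
proof -
  have "y (t \<otimes> u) \<le> ln (C * w t * w u)"
    using w_sub[OF t u] w_pos[of "t \<otimes> u"] t u by simp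
  also have "\<dots> = ln C + y t + y u" using C_pos w_pos[OF t] w_pos[OF u] by (simp add: ln_mult)
  finally show ?thesis .
qed

lemma L_sub: "L (n + m) \<le> ln C + L n + L m"
proof -
  define K0 where "K0 = C powr (1/p0)"
  have K00: "0 \<le> K0" unfolding K0_def by simp
  define c0 where "c0 = \<bar>ln a\<bar> + p0 * K0"
  have c00: "0 \<le> c0" unfolding c0_def using K00 p0 by simp
  let ?P = "\<lambda>(t,u). Pr n t * Pr m u * y (t \<otimes> u)"
  have bnd: "norm (?P (t,u)) \<le> (c0 * (Pr n t + Pr n t * v0 t)) * (Pr m u + Pr m u * v0 u)"
    if t: "t \<in> carrier G" and u: "u \<in> carrier G" for t u
  proof -
    have vt: "0 \<le> v0 t" and vu: "0 \<le> v0 u" by simp_all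
    have "\<bar>y (t \<otimes> u)\<bar> \<le> \<bar>ln a\<bar> + p0 * v0 (t \<otimes> u)" using y_abs t u by simp
    also have "\<dots> \<le> \<bar>ln a\<bar> + p0 * (K0 * v0 t * v0 u)"
      using W0.v_sub[OF t u] p0 unfolding K0_def by (intro add_left_mono mult_left_mono) auto
    also have "\<dots> \<le> c0 * ((1 + v0 t) * (1 + v0 u))"
    proof -
      have "1 \<le> (1 + v0 t) * (1 + v0 u)" using vt vu by (simp add: algebra_simps)
      moreover have "v0 t * v0 u \<le> (1 + v0 t) * (1 + v0 u)" using vt vu by (simp add: algebra_simps)
      ultimately have "\<bar>ln a\<bar> * 1 + p0 * K0 * (v0 t * v0 u) \<le> \<bar>ln a\<bar> * ((1 + v0 t) * (1 + v0 u)) + p0 * K0 * ((1 + v0 t) * (1 + v0 u))"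
        using K00 p0 by (intro add_mono mult_left_mono) auto
      then show ?thesis unfolding c0_def by (simp add: algebra_simps)
    qed
    finally have "Pr n t * Pr m u * \<bar>y (t \<otimes> u)\<bar> \<le> Pr n t * Pr m u * (c0 * ((1 + v0 t) * (1 + v0 u)))"
      using Pr_nonneg by (intro mult_left_mono) auto
    then show ?thesis using Pr_nonneg[of n t] Pr_nonneg[of m u] by (simp add: abs_mult algebra_simps)
  qed
  have \<alpha>: "(\<lambda>t. c0 * (Pr n t + Pr n t * v0 t)) summable_on carrier G"
    by (intro summable_on_cmult_right summable_on_add Pr_summable Pr_v0)
  have \<beta>: "(\<lambda>u. Pr m u + Pr m u * v0 u) summable_on carrier G"
    by (intro summable_on_add Pr_summable Pr_v0)
  have nn1: "0 \<le> c0 * (Pr n t + Pr n t * v0 t)" for t using c00 Pr_nonneg[of n t] by simp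
  have nn2: "0 \<le> Pr m u + Pr m u * v0 u" for u using Pr_nonneg[of m u] by simp
  have Pn: "(\<lambda>p. norm (?P p)) summable_on carrier G \<times> carrier G"
    by (rule prod_summable(1)[OF \<alpha> \<beta> nn1 nn2 bnd])
  have Ps: "?P summable_on carrier G \<times> carrier G"
    by (rule prod_summable(2)[OF \<alpha> \<beta> nn1 nn2 bnd])
  have sm: "(\<lambda>(t,u). norm (Pr n t * Pr m u * y (t \<otimes> u))) summable_on (carrier G \<times> carrier G)"
    using Pn by (simp add: case_prod_unfold)
  have "L (n + m) = (\<Sum>\<^sub>\<infinity>s\<in>carrier G. conv G (Pr n) (Pr m) s * y s)"
    unfolding L_def by (intro infsum_cong) (simp add: W0.pow_add[OF \<mu>L0])
  also have "\<dots> = (\<Sum>\<^sub>\<infinity>t\<in>carrier G. \<Sum>\<^sub>\<infinity>u\<in>carrier G. Pr n t * Pr m u * y (t \<otimes> u))"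
    by (rule W0.conv_weighted(2)[OF sm])
  also have "\<dots> \<le> (\<Sum>\<^sub>\<infinity>t\<in>carrier G. (ln C + L m) * Pr n t + 1 * (Pr n t * y t))"
  proof (rule infsum_mono)
    show "(\<lambda>t. \<Sum>\<^sub>\<infinity>u\<in>carrier G. Pr n t * Pr m u * y (t \<otimes> u)) summable_on carrier G"
      using summable_on_Sigma_banach[of "\<lambda>t u. Pr n t * Pr m u * y (t \<otimes> u)" "carrier G" "\<lambda>_. carrier G"] Ps
      by simp
    show "(\<lambda>t. (ln C + L m) * Pr n t + 1 * (Pr n t * y t)) summable_on carrier G"
      by (rule lin_summable[OF Pr_summable Py_summable])
    fix t assume t: "t \<in> carrier G"
    have sl: "(\<lambda>u. Pr n t * Pr m u * y (t \<otimes> u)) summable_on carrier G"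
      using summable_on_SigmaD1[of "\<lambda>t u. Pr n t * Pr m u * y (t \<otimes> u)" "carrier G" "\<lambda>_. carrier G" t] Ps t
      by simp
    have e: "Pr n t * Pr m u * (ln C + y t + y u) = Pr n t * ((ln C + y t) * Pr m u + 1 * (Pr m u * y u))" for u
      by (simp add: algebra_simps)
    have "(\<Sum>\<^sub>\<infinity>u\<in>carrier G. Pr n t * Pr m u * y (t \<otimes> u)) \<le> (\<Sum>\<^sub>\<infinity>u\<in>carrier G. Pr n t * ((ln C + y t) * Pr m u + 1 * (Pr m u * y u)))"
    proof (rule infsum_mono[OF sl])
      show "(\<lambda>u. Pr n t * ((ln C + y t) * Pr m u + 1 * (Pr m u * y u))) summable_on carrier G"
        by (intro summable_on_cmult_right lin_summable[OF Pr_summable Py_summable])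
      fix u assume u: "u \<in> carrier G"
      have "Pr n t * Pr m u * y (t \<otimes> u) \<le> Pr n t * Pr m u * (ln C + y t + y u)"
        using y_sub[OF t u] Pr_nonneg by (intro mult_left_mono) auto
      then show "Pr n t * Pr m u * y (t \<otimes> u) \<le> Pr n t * ((ln C + y t) * Pr m u + 1 * (Pr m u * y u))"
        unfolding e .
    qed
    also have "\<dots> = Pr n t * ((ln C + y t) * 1 + 1 * L m)"
      by (simp only: infsum_cmult_right' lin_infsum[OF Pr_summable Py_summable] Pr_sum1 L_def)
    also have "\<dots> = (ln C + L m) * Pr n t + 1 * (Pr n t * y t)" by (simp add: algebra_simps)
    finally show "(\<Sum>\<^sub>\<infinity>u\<in>carrier G. Pr n t * Pr m u * y (t \<otimes> u)) \<le> (ln C + L m) * Pr n t + 1 * (Pr n t * y t)" .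
  qed
  also have "\<dots> = ln C + L n + L m"
    by (simp only: lin_infsum[OF Pr_summable Py_summable] Pr_sum1 L_def) simp
  finally show ?thesis .
qed


definition A :: "real \<Rightarrow> nat \<Rightarrow> real" where "A p n = (\<Sum>\<^sub>\<infinity>s\<in>carrier G. Pr n s * w s powr (1/p))"

lemma wp_le: assumes p: "p0 \<le> p" and s: "s \<in> carrier G" shows "w s powr (1/p) \<le> 1 + v0 s"
proof (cases "1 \<le> w s")
  case True
  have "1/p \<le> 1/p0" using p p0 by (intro divide_left_mono) auto
  then have "w s powr (1/p) \<le> v0 s" using True by (rule powr_mono)
  then show ?thesis by simp
next
  case False
  have "w s powr (1/p) \<le> 1" using False w_pos[OF s] p p0 by (intro powr_le1) auto
  then show ?thesis by (smt (verit) powr_ge_zero)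
qed

lemma A_summable: assumes p: "p0 \<le> p" shows "(\<lambda>s. Pr n s * w s powr (1/p)) summable_on carrier G"
proof (rule summable_on_comparison_test)
  show "(\<lambda>s. Pr n s + Pr n s * v0 s) summable_on carrier G" by (intro summable_on_add Pr_summable Pr_v0)
  fix s assume s: "s \<in> carrier G"
  have "Pr n s * w s powr (1/p) \<le> Pr n s * (1 + v0 s)" using wp_le[OF p s] Pr_nonneg by (intro mult_left_mono) auto
  then show "Pr n s * w s powr (1/p) \<le> Pr n s + Pr n s * v0 s" by (simp add: algebra_simps)
  show "0 \<le> Pr n s * w s powr (1/p)" using Pr_nonneg by simp
qed

lemma expy: assumes s: "s \<in> carrier G" shows "w s powr (1/p) = exp (y s / p)"
  using w_pos[OF s] by (simp add: powr_def)

lemma jensen: assumes p: "p0 \<le> p" shows "exp (L n / p) \<le> A p n"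
proof -
  define m where "m = L n / p"
  have p0': "0 < p" using p p0 by simp
  have e: "Pr n s * (exp m * (1 + (y s / p - m))) = (exp m * (1 - m)) * Pr n s + (exp m / p) * (Pr n s * y s)" for s
    using p0' by (simp add: field_simps)
  have "(\<Sum>\<^sub>\<infinity>s\<in>carrier G. Pr n s * (exp m * (1 + (y s / p - m)))) \<le> A p n"
    unfolding A_def
  proof (rule infsum_mono)
    show "(\<lambda>s. Pr n s * (exp m * (1 + (y s / p - m)))) summable_on carrier G"
      unfolding e by (rule lin_summable[OF Pr_summable Py_summable])
    show "(\<lambda>s. Pr n s * w s powr (1/p)) summable_on carrier G" by (rule A_summable[OF p])
    fix s assume s: "s \<in> carrier G"
    show "Pr n s * (exp m * (1 + (y s / p - m))) \<le> Pr n s * w s powr (1/p)"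
      unfolding expy[OF s] using exp_tangent[of m "y s / p"] Pr_nonneg by (intro mult_left_mono) auto
  qed
  moreover have "(\<Sum>\<^sub>\<infinity>s\<in>carrier G. Pr n s * (exp m * (1 + (y s / p - m)))) = exp m"
  proof -
    have "(\<Sum>\<^sub>\<infinity>s\<in>carrier G. Pr n s * (exp m * (1 + (y s / p - m)))) = exp m * (1 - m) * 1 + exp m / p * L n"
      unfolding e by (simp only: lin_infsum[OF Pr_summable Py_summable] Pr_sum1 L_def)
    also have "\<dots> = exp m" unfolding m_def using p0' by (simp add: field_simps)
    finally show ?thesis .
  qed
  ultimately show ?thesis unfolding m_def by simp
qed

lemma A_pos: "p0 \<le> p \<Longrightarrow> 0 < A p n"
  using jensen[of p n] by (smt (verit) exp_gt_zero)

lemma ln_A_ge: assumes p: "p0 \<le> p" shows "L n \<le> p * ln (A p n)"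
proof -
  have p0': "0 < p" using p p0 by simp
  have "L n / p \<le> ln (A p n)" using jensen[OF p, of n] A_pos[OF p, of n]
    by (metis exp_le_cancel_iff exp_ln)
  then show ?thesis using p0' by (simp add: field_simps)
qed

definition E :: real where "E = exp \<bar>ln a\<bar>"
definition Phi :: "'a \<Rightarrow> real" where "Phi s = (E + 1) * ((ln a)\<^sup>2 + 16 * p0\<^sup>2 * v0 s)"
definition D :: "nat \<Rightarrow> real" where "D n = (\<Sum>\<^sub>\<infinity>s\<in>carrier G. Pr n s * Phi s)"

lemma PPhi_summable: "(\<lambda>s. Pr n s * Phi s) summable_on carrier G"
proof -
  have "(\<lambda>s. ((E + 1) * (ln a)\<^sup>2) * Pr n s + ((E + 1) * 16 * p0\<^sup>2) * (Pr n s * v0 s)) summable_on carrier G"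
    by (rule lin_summable[OF Pr_summable Pr_v0])
  then show ?thesis by (rule summable_on_cong[THEN iffD1, rotated]) (simp add: Phi_def algebra_simps)
qed

lemma E_pos: "0 < E" unfolding E_def by simp

lemma y2_bound: assumes p: "2 * p0 \<le> p" and s: "s \<in> carrier G"
  shows "(y s)\<^sup>2 * exp (\<bar>y s\<bar> / p) \<le> Phi s"
proof -
  have p1: "1 \<le> p" using p p0 by simp
  have ws: "0 < w s" by (rule w_pos[OF s])
  have wp0: "0 \<le> w s powr (1/p)" by simp
  have expb: "exp (\<bar>y s\<bar> / p) \<le> E + w s powr (1/p)"
  proof (cases "0 \<le> y s")
    case True
    then have "exp (\<bar>y s\<bar> / p) = w s powr (1/p)" using expy[OF s] by simp
    then show ?thesis using E_pos by simp
  next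
    case False
    have "\<bar>y s\<bar> \<le> \<bar>ln a\<bar>" using False y_ge[OF s] by simp
    moreover have "\<bar>y s\<bar> / p \<le> \<bar>y s\<bar>"
    proof -
      have "\<bar>y s\<bar> * 1 \<le> \<bar>y s\<bar> * p" using p1 by (intro mult_left_mono) auto
      then show ?thesis using p1 by (simp add: divide_le_eq)
    qed
    ultimately have "exp (\<bar>y s\<bar> / p) \<le> E" unfolding E_def by simp
    then show ?thesis using wp0 by linarith
  qed
  have main: "(y s)\<^sup>2 * (E + w s powr (1/p)) \<le> Phi s"
  proof (cases "1 \<le> w s")
    case True
    define h where "h = w s powr (1 / (2 * p0))"
    have y0: "0 \<le> y s" using True by simp
    have "y s \<le> (4 * p0) * w s powr (1 / (4 * p0))" using ln_le_powr[OF ws, of "4 * p0"] p0 by simp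
    then have "(y s)\<^sup>2 \<le> ((4 * p0) * w s powr (1 / (4 * p0)))\<^sup>2" using y0 by (intro power_mono) auto
    also have "\<dots> = 16 * p0\<^sup>2 * h"
    proof -
      have f: "1 / (4 * p0) + 1 / (4 * p0) = 1 / (2 * p0)" by simp
      have "(w s powr (1 / (4 * p0)))\<^sup>2 = w s powr (1 / (4 * p0)) * w s powr (1 / (4 * p0))"
        by (simp add: power2_eq_square)
      also have "\<dots> = w s powr (1 / (4 * p0) + 1 / (4 * p0))" by (rule powr_add[symmetric])
      also have "\<dots> = h" unfolding h_def by (simp only: f)
      finally show ?thesis by (simp add: power_mult_distrib)
    qed
    finally have y2: "(y s)\<^sup>2 \<le> 16 * p0\<^sup>2 * h" .
    have h0: "0 \<le> h" unfolding h_def by simp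
    have hv: "h \<le> v0 s" unfolding h_def using True p0 by (intro powr_mono) (auto simp: divide_le_eq)
    have wh: "w s powr (1/p) \<le> h" unfolding h_def using True p p0 by (intro powr_mono) (auto simp: frac_le)
    have hh: "h * h = v0 s"
    proof -
      have f: "1 / (2 * p0) + 1 / (2 * p0) = 1 / p0" by simp
      have "h * h = w s powr (1 / (2 * p0) + 1 / (2 * p0))" unfolding h_def by (rule powr_add[symmetric])
      also have "\<dots> = v0 s" by (simp only: f)
      finally show ?thesis .
    qed
    have "(y s)\<^sup>2 * (E + w s powr (1/p)) \<le> (16 * p0\<^sup>2 * h) * (E + h)"
      using y2 wh E_pos wp0 h0 by (intro mult_mono) auto
    also have "\<dots> = 16 * p0\<^sup>2 * (E * h + h * h)" by (simp add: algebra_simps)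
    also have "\<dots> \<le> 16 * p0\<^sup>2 * (E * v0 s + v0 s)"
      unfolding hh using hv E_pos by (intro mult_left_mono add_mono) auto
    also have "\<dots> \<le> Phi s" unfolding Phi_def using E_pos
      by (simp add: algebra_simps)
    finally show ?thesis .
  next
    case False
    have "\<bar>y s\<bar> \<le> \<bar>ln a\<bar>" using False y_ge[OF s] ws by simp
    then have y2: "(y s)\<^sup>2 \<le> (ln a)\<^sup>2" by (simp add: abs_le_square_iff)
    have "w s powr (1/p) \<le> 1" using False ws p1 by (intro powr_le1) auto
    then have "(y s)\<^sup>2 * (E + w s powr (1/p)) \<le> (ln a)\<^sup>2 * (E + 1)"
      using y2 E_pos wp0 by (intro mult_mono) auto
    also have "\<dots> \<le> Phi s" unfolding Phi_def using E_pos p0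
      by (simp add: algebra_simps)
    finally show ?thesis .
  qed
  have "(y s)\<^sup>2 * exp (\<bar>y s\<bar> / p) \<le> (y s)\<^sup>2 * (E + w s powr (1/p))"
    using expb by (intro mult_left_mono) auto
  then show ?thesis using main by simp
qed

lemma A_upper: assumes p: "2 * p0 \<le> p" shows "p * ln (A p n) \<le> L n + D n / p"
proof -
  have pp: "p0 \<le> p" using p p0 by simp
  have p0': "0 < p" using p p0 by simp
  have pt: "w s powr (1/p) \<le> 1 + y s / p + Phi s / p\<^sup>2" if s: "s \<in> carrier G" for s
  proof -
    have "w s powr (1/p) \<le> 1 + y s / p + (y s / p)\<^sup>2 * exp \<bar>y s / p\<bar>"
      unfolding expy[OF s] by (rule exp_upper)
    also have "(y s / p)\<^sup>2 * exp \<bar>y s / p\<bar> = ((y s)\<^sup>2 * exp (\<bar>y s\<bar> / p)) / p\<^sup>2"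
      using p0' by (simp add: power_divide)
    also have "\<dots> \<le> Phi s / p\<^sup>2" using y2_bound[OF p s] by (simp add: divide_right_mono)
    finally show ?thesis by simp
  qed
  have e: "Pr n s * (1 + y s / p + Phi s / p\<^sup>2) = 1 * Pr n s + (1/p) * (Pr n s * y s) + (1/p\<^sup>2) * (Pr n s * Phi s)" for s
    by (simp add: algebra_simps)
  have "A p n \<le> (\<Sum>\<^sub>\<infinity>s\<in>carrier G. Pr n s * (1 + y s / p + Phi s / p\<^sup>2))"
    unfolding A_def
  proof (rule infsum_mono[OF A_summable[OF pp]])
    show "(\<lambda>s. Pr n s * (1 + y s / p + Phi s / p\<^sup>2)) summable_on carrier G"
      unfolding e by (intro summable_on_add summable_on_cmult_right Pr_summable Py_summable PPhi_summable)
    fix s assume s: "s \<in> carrier G"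
    show "Pr n s * w s powr (1/p) \<le> Pr n s * (1 + y s / p + Phi s / p\<^sup>2)"
      using pt[OF s] Pr_nonneg by (intro mult_left_mono) auto
  qed
  also have "\<dots> = 1 + L n / p + D n / p\<^sup>2"
  proof -
    have s1: "(\<lambda>s. 1 * Pr n s + (1/p) * (Pr n s * y s)) summable_on carrier G"
      by (rule lin_summable[OF Pr_summable Py_summable])
    have s2: "(\<lambda>s. (1/p\<^sup>2) * (Pr n s * Phi s)) summable_on carrier G"
      by (rule summable_on_cmult_right[OF PPhi_summable])
    have "(\<Sum>\<^sub>\<infinity>s\<in>carrier G. Pr n s * (1 + y s / p + Phi s / p\<^sup>2)) =
        (\<Sum>\<^sub>\<infinity>s\<in>carrier G. (1 * Pr n s + (1/p) * (Pr n s * y s)) + (1/p\<^sup>2) * (Pr n s * Phi s))"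
      unfolding e ..
    also have "\<dots> = (\<Sum>\<^sub>\<infinity>s\<in>carrier G. 1 * Pr n s + (1/p) * (Pr n s * y s)) + (\<Sum>\<^sub>\<infinity>s\<in>carrier G. (1/p\<^sup>2) * (Pr n s * Phi s))"
      by (rule infsum_add[OF s1 s2])
    also have "\<dots> = (1 * 1 + (1/p) * L n) + (1/p\<^sup>2) * D n"
      by (simp only: lin_infsum[OF Pr_summable Py_summable] infsum_cmult_right' Pr_sum1 L_def D_def)
    finally show ?thesis by simp
  qed
  finally have Ab: "A p n \<le> 1 + L n / p + D n / p\<^sup>2" .
  have "ln (A p n) \<le> A p n - 1" using A_pos[OF pp] by (rule ln_le_minus_one)
  then have "ln (A p n) \<le> L n / p + D n / p\<^sup>2" using Ab by linarith
  then have "p * ln (A p n) \<le> p * (L n / p + D n / p\<^sup>2)" using p0' by (intro mult_left_mono) auto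
  also have "\<dots> = L n + D n / p" using p0' by (simp add: field_simps power2_eq_square)
  finally show ?thesis .
qed


definition c :: "nat \<Rightarrow> real" where "c n = L n + ln C"
definition Ly :: real where "Ly = Inf ((\<lambda>n. c n / n) ` {n. 1 \<le> n})"

lemma c_sub: "c (n + m) \<le> c n + c m"
  unfolding c_def using L_sub[of n m] by simp

lemma div_nat_le_self: assumes "0 \<le> (x::real)" "1 \<le> n" shows "x / real n \<le> x"
proof -
  have "x * 1 \<le> x * real n" using assms by (intro mult_left_mono) auto
  then show ?thesis using assms by (simp add: divide_le_eq)
qed

lemma neg_le_div_nat: assumes "(x::real) < 0" "1 \<le> n" shows "x \<le> x / real n"
proof -
  have "x * real n \<le> x * 1" using assms by (intro mult_left_mono_neg) auto
  then show ?thesis using assms by (simp add: le_divide_eq)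
qed

lemma c_bdd: assumes n: "1 \<le> n" shows "- \<bar>ln a + ln C\<bar> \<le> c n / n"
proof -
  have k: "ln a + ln C \<le> c n" unfolding c_def using L_ge[of n] by simp
  show ?thesis
  proof (cases "0 \<le> c n")
    case True
    then have "0 \<le> c n / n" by simp
    then show ?thesis by linarith
  next
    case False
    then have "c n \<le> c n / n" using n by (intro neg_le_div_nat) auto
    then show ?thesis using k by linarith
  qed
qed

lemma c_lim: "(\<lambda>n. c n / n) \<longlonglongrightarrow> Ly"
  unfolding Ly_def by (rule fekete[OF c_sub c_bdd])

lemma Ly_le: "1 \<le> n \<Longrightarrow> Ly \<le> c n / n"
  unfolding Ly_def
  by (rule cInf_lower) (auto intro!: bdd_belowI[where m = "- \<bar>ln a + ln C\<bar>"] c_bdd)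

lemma Ly_less: "Ly < r \<Longrightarrow> \<exists>n. 1 \<le> n \<and> c n / n < r"
  unfolding Ly_def by (drule cInf_lessD[rotated]) auto

lemma L_lim: "(\<lambda>n. (1 / real n) * L n) \<longlonglongrightarrow> Ly"
proof -
  have "(\<lambda>n. c n / n - ln C / real n) \<longlonglongrightarrow> Ly - 0"
    by (intro tendsto_diff c_lim lim_const_over_n)
  moreover have "(\<lambda>n. c n / n - ln C / real n) = (\<lambda>n. (1 / real n) * L n)"
    unfolding c_def by (auto simp: field_simps diff_divide_distrib add_divide_distrib)
  ultimately show ?thesis by simp
qed

definition SR :: "real \<Rightarrow> real" where
  "SR p = l1_spectral_radius G (\<lambda>s. w s powr (1/p)) (\<lambda>s. complex_of_real (\<mu> s))"

lemma SR_eq: assumes p: "p0 \<le> p"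
  shows "SR p = Inf ((\<lambda>n. root n (C powr (1/p) * A p n)) ` {n. 1 \<le> n})"
proof -
  have p0': "0 < p" using p p0 by simp
  interpret W: wconv G "\<lambda>s. w s powr (1/p)" "a powr (1/p)" "C powr (1/p)" by (rule wc[OF p0'])
  have L1p: "W.L1 \<mu>"
    unfolding W.L1_def using A_summable[OF p, of 1]
    by (rule summable_on_cong[THEN iffD1, rotated]) (auto simp: \<mu>0 W0.conv_delta_right)
  have N: "W.N \<mu> n = C powr (1/p) * A p n" for n
    using W.N_def[OF \<mu>0 \<mu>1 L1p, of n] unfolding W.nrm_def A_def by (simp add: Pr_nonneg)
  have "SR p = W.rho \<mu>" unfolding SR_def by (rule W.specrad[OF \<mu>0 \<mu>1 L1p])
  also have "\<dots> = Inf ((\<lambda>n. root n (W.N \<mu> n)) ` {n. 1 \<le> n})" by (rule W.rho_def[OF \<mu>0 \<mu>1 L1p])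
  also have "\<dots> = Inf ((\<lambda>n. root n (C powr (1/p) * A p n)) ` {n. 1 \<le> n})" by (simp only: N)
  finally show ?thesis .
qed

lemma SR_bounds: assumes p: "p0 \<le> p"
  shows "Ly \<le> p * ln (SR p)" and "1 \<le> n \<Longrightarrow> p * ln (SR p) \<le> (ln C + p * ln (A p n)) / n"
proof -
  have p0': "0 < p" using p p0 by simp
  define f where "f = (\<lambda>n. root n (C powr (1/p) * A p n))"
  have fpos: "0 < f n" if "1 \<le> n" for n
  proof -
    have "0 < C powr (1/p) * A p n" using A_pos[OF p] C_pos by simp
    then show ?thesis unfolding f_def using that by (intro real_root_gt_zero) auto
  qed
  have lnf: "p * ln (f n) = (ln C + p * ln (A p n)) / n" if n: "1 \<le> n" for n
  proof -
    have "ln (f n) = ln (C powr (1/p) * A p n) / n" unfolding f_def using n by (simp add: ln_root)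
    also have "ln (C powr (1/p) * A p n) = ln (C powr (1/p)) + ln (A p n)"
      using C_pos A_pos[OF p, of n] by (intro ln_mult_pos) auto
    also have "ln (C powr (1/p)) = ln C / p" by simp
    finally have "ln (f n) = (ln C / p + ln (A p n)) / n" .
    then have "p * ln (f n) = p * ((ln C / p + ln (A p n)) / n)" by simp
    also have "\<dots> = (ln C + p * ln (A p n)) / n" using p0' n by (simp add: field_simps)
    finally show ?thesis .
  qed
  have fge: "exp (Ly / p) \<le> f n" if n: "1 \<le> n" for n
  proof -
    have "Ly \<le> c n / n" by (rule Ly_le[OF n])
    also have "c n / n \<le> (ln C + p * ln (A p n)) / n" unfolding c_def
      using ln_A_ge[OF p, of n] n by (simp add: divide_right_mono)
    also have "\<dots> = p * ln (f n)" by (rule lnf[OF n, symmetric])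
    finally have "Ly / p \<le> ln (f n)" using p0' by (simp add: field_simps)
    then show ?thesis using fpos[OF n] by (metis exp_le_cancel_iff exp_ln)
  qed
  have SR: "SR p = Inf (f ` {n. 1 \<le> n})" unfolding f_def by (rule SR_eq[OF p])
  have ge: "exp (Ly / p) \<le> SR p" unfolding SR by (rule cInf_greatest) (auto intro: fge)
  have SRpos: "0 < SR p" using ge by (smt (verit) exp_gt_zero)
  show "Ly \<le> p * ln (SR p)"
  proof -
    have "Ly / p \<le> ln (SR p)" using ge SRpos by (metis exp_le_cancel_iff exp_ln)
    then show ?thesis using p0' by (simp add: field_simps)
  qed
  assume n: "1 \<le> n"
  have "SR p \<le> f n" unfolding SR
    by (rule cInf_lower) (use n fpos in \<open>auto intro!: bdd_belowI[where m = 0] less_imp_le\<close>)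
  then have "ln (SR p) \<le> ln (f n)" using SRpos by simp
  then have "p * ln (SR p) \<le> p * ln (f n)" using p0' by simp
  then show "p * ln (SR p) \<le> (ln C + p * ln (A p n)) / n" using lnf[OF n] by simp
qed

lemma D_nonneg: "0 \<le> D n"
  unfolding D_def Phi_def using E_pos by (intro infsum_nonneg mult_nonneg_nonneg Pr_nonneg) auto

lemma SR_lim: "((\<lambda>p. p * ln (SR p)) \<longlongrightarrow> Ly) at_top"
proof (rule tendstoI)
  fix e :: real assume e: "0 < e"
  obtain n where n: "1 \<le> n" "c n / n < Ly + e / 2" using Ly_less[of "Ly + e / 2"] e by auto
  define P where "P = max (2 * p0) (2 * D n / e + 1)"
  show "eventually (\<lambda>p. dist (p * ln (SR p)) Ly < e) at_top"
    unfolding eventually_at_top_linorder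
  proof (intro exI allI impI)
    fix p assume pP: "P \<le> p"
    have p2: "2 * p0 \<le> p" using pP unfolding P_def by simp
    have p: "p0 \<le> p" using p2 p0 by simp
    have p0': "0 < p" using p p0 by simp
    have "p * ln (SR p) \<le> (ln C + p * ln (A p n)) / n" by (rule SR_bounds(2)[OF p n(1)])
    also have "\<dots> \<le> (ln C + (L n + D n / p)) / n"
      using A_upper[OF p2, of n] n by (intro divide_right_mono) auto
    also have "\<dots> = c n / n + D n / p / n" unfolding c_def by (simp add: add_divide_distrib)
    also have "D n / p / n \<le> D n / p"
      using n D_nonneg[of n] p0' by (intro div_nat_le_self) auto
    also have "D n / p < e / 2"
    proof -
      have "2 * D n / e < p" using pP unfolding P_def by simp
      then show ?thesis using e p0' by (simp add: field_simps)
    qed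
    finally have up: "p * ln (SR p) < Ly + e" using n(2) by linarith
    have low: "Ly \<le> p * ln (SR p)" by (rule SR_bounds(1)[OF p])
    show "dist (p * ln (SR p)) Ly < e" using up low by (simp add: dist_real_def)
  qed
qed

end


theorem theorem3p4:
  fixes G :: "('a, 'm) monoid_scheme" and w :: "'a \<Rightarrow> real" and \<mu> :: "'a \<Rightarrow> real"
  assumes "group G" and "countable (carrier G)"
    and "is_weight G w"
    and "\<forall>s\<in>carrier G. 0 \<le> \<mu> s" and "(\<mu> has_sum 1) (carrier G)"
    and "\<exists>p\<ge>1. (\<lambda>s. \<mu> s * w s powr (1 / p)) summable_on carrier G"
  shows "\<exists>L::real.
     (\<forall>n\<ge>1. (\<lambda>s. conv_pow G \<mu> n s * ln (w s)) summable_on carrier G) \<and>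
     ((\<lambda>n. (1 / real n) * (\<Sum>\<^sub>\<infinity>s\<in>carrier G. conv_pow G \<mu> n s * ln (w s))) \<longlonglongrightarrow> L) \<and>
     ((\<lambda>p::real. p * ln (l1_spectral_radius G (\<lambda>s. w s powr (1 / p)) (\<lambda>s. complex_of_real (\<mu> s))))
        \<longlongrightarrow> L) at_top"
proof -
  from assms(3) obtain a C where a: "0 < a" "\<forall>s\<in>carrier G. a \<le> w s"
    and C: "0 < C" "\<forall>s\<in>carrier G. \<forall>t\<in>carrier G. w (s \<otimes>\<^bsub>G\<^esub> t) \<le> C * w s * w t"
    unfolding is_weight_def by blast
  obtain p0 where p0: "1 \<le> p0" "(\<lambda>s. \<mu> s * w s powr (1 / p0)) summable_on carrier G"
    using assms(6) by blast
  have "lyap G w \<mu> a C p0"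
    by (intro lyap.intro lyap_axioms.intro assms(1)) (use a C p0 assms(4,5) in auto)
  then interpret lyap G w \<mu> a C p0 .
  show ?thesis
  proof (intro exI conjI allI impI)
    fix n :: nat
    show "(\<lambda>s. conv_pow G \<mu> n s * ln (w s)) summable_on carrier G" by (rule Py_summable)
  next
    show "(\<lambda>n. (1 / real n) * (\<Sum>\<^sub>\<infinity>s\<in>carrier G. conv_pow G \<mu> n s * ln (w s))) \<longlonglongrightarrow> Ly"
      using L_lim unfolding L_def .
  next
    show "((\<lambda>p::real. p * ln (l1_spectral_radius G (\<lambda>s. w s powr (1 / p)) (\<lambda>s. complex_of_real (\<mu> s))))
        \<longlongrightarrow> Ly) at_top"
      using SR_lim unfolding SR_def .
  qed
qed

end
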